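(* Let $G=(V,E)$ be a graph, $v\in V$, $S_v$ the partial star product of $v$, let $\varphi_1,\dots,\varphi_k$ be the equivalence classes of $\mathfrak d_v^*$ that contain at least one edge of $E_v$, and let $H=\Box_{i=1}^k\mathbb S_i$ where $\mathbb S_i$ is the star factor of $\varphi_i$. Then: (1) $S_v$ is isomorphic to the induced subgraph $\langle N_2^H[\bar v]\rangle$, where $\bar v=(v,\dots,v)$ is the vertex of $H$ all of whose coordinates are the star-centers; in particular $S_v$ is an isometric subgraph of $H$. More precisely, there is an isomorphism $\gamma$ from $S_v$ onto $\langle N_2^H[\bar v]\rangle$ with $\gamma(v)=\bar v$ and $\gamma(u)$ equal to the vertex with $i$-th coordinate $u$ and all other coordinates $v$ for every $u\in N_{\varphi_i}(v)$, and $\gamma$ is an isometric embedding of $S_v$ into $H$. (2) Identifying $S_v$ with its image under $\gamma$, one has $\mathfrak d_{|S_v}\subseteq\delta(H)^*\subseteq\sigma(H)$. (3) The product relation $\sigma(H)$ has the same number of equivalence classes as $\mathfrak d_{|S_v}$.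
   Context: All graphs are finite, simple and undirected. For $G=(V,E)$ and $v\in V$, $E_v$ is the set of edges incident to $v$. For two distinct adjacent edges $e=(v,u)$, $f=(v,w)$, a square spanned by $e$ and $f$ is a $4$-cycle $v,u,x,w,v$ with $x\notin\{v,u,w\}$ ($x$ its top vertex); it is chordless if neither $(u,w)$ nor $(v,x)$ is an edge. In a chordless square $v,u,x,w$, $(x,w)$ is opposite to $(v,u)$ and $(x,u)$ is opposite to $(v,w)$ (and vice versa). For any graph $X$, the relation $\delta(X)$ on $E(X)$: $(e,f)\in\delta(X)$ iff (i) $e,f$ are distinct adjacent edges and it is not the case that $e$ and $f$ span exactly one square and that square is chordless; or (ii) $e,f$ are opposite edges of a chordless square; or (iii) $e=f$. $R^*$ denotes the transitive closure of a relation $R$. Define $\mathfrak d_v=((E_v\times E)\cup(E\times E_v))\cap\delta(G)$ and $\mathfrak d_v^*$ the finest equivalence relation on $E$ containing $\mathfrak d_v$. Let $F_v\subseteq E\setminus E_v$ be the set of edges that are the edges not incident to $v$ of some chordless square spanned by two edges $e,e'\in E_v$ with $(e,e')\notin\mathfrak d_v^*$. The partial star product $S_v$ is the subgraph of $G$ with edge set $E_v\cup F_v$ and vertex set the endpoints of these edges. $\mathfrak d_{|S_v}=\{(e,f)\in\mathfrak d_v^*: e,f\in E(S_v)\}$. For an equivalence class $\varphi$ of $\mathfrak d_v^*$, $N_\varphi(v)=\{u:(v,u)\in\varphi\}$ and $N_\varphi[v]=N_\varphi(v)\cup\{v\}$; the star factor of $\varphi$ is the graph with vertex set $N_\varphi[v]$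 and edge set $\{(v,u):u\in N_\varphi(v)\}$ (a star with center $v$). Cartesian product $\Box$: vertex set is the Cartesian product of vertex sets, two vertices adjacent iff they differ in exactly one coordinate and those coordinates are adjacent in the corresponding factor. $N_2^H[x]=\{y: d_H(x,y)\le2\}$. An isometric embedding is an injective map preserving distances. Every connected graph has a unique decomposition into Cartesian prime factors (up to order and isomorphism); the product relation $\sigma(H)$ on $E(H)$ relates two edges iff their endpoints differ in the coordinate of the same prime factor with respect to the prime factor decomposition of $H$. *)

theory Defs
  imports Main "HOL-Library.FuncSet" "HOL-Library.Extended_Nat"
begin

type_synonym 'a graph = "'a set \<times> 'a set set"

abbreviation verts :: "'a graph \<Rightarrow> 'a set" where "verts G \<equiv> fst G"
abbreviation edges :: "'a graph \<Rightarrow> 'a set set" where "edges G \<equiv> snd G"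

definition simple_graph :: "'a graph \<Rightarrow> bool" where
  "simple_graph G \<longleftrightarrow> finite (verts G) \<and>
     (\<forall>e\<in>edges G. \<exists>x y. x \<noteq> y \<and> x \<in> verts G \<and> y \<in> verts G \<and> e = {x, y})"

definition adj :: "'a graph \<Rightarrow> 'a \<Rightarrow> 'a \<Rightarrow> bool" where
  "adj G x y \<longleftrightarrow> x \<noteq> y \<and> {x, y} \<in> edges G"

definition inc_edges :: "'a graph \<Rightarrow> 'a \<Rightarrow> 'a set set" where
  "inc_edges G v = {e \<in> edges G. v \<in> e}"

definition sq_tops :: "'a graph \<Rightarrow> 'a \<Rightarrow> 'a \<Rightarrow> 'a \<Rightarrow> 'a set" where
  "sq_tops G v u w = {x. x \<notin> {v, u, w} \<and> adj G u x \<and> adj G x w}"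

definition chordless_sq :: "'a graph \<Rightarrow> 'a \<Rightarrow> 'a \<Rightarrow> 'a \<Rightarrow> 'a \<Rightarrow> bool" where
  "chordless_sq G v u x w \<longleftrightarrow> adj G v u \<and> adj G u x \<and> adj G x w \<and> adj G w v \<and>
     distinct [v, u, x, w] \<and> \<not> adj G u w \<and> \<not> adj G v x"

definition opposite :: "'a graph \<Rightarrow> 'a set \<Rightarrow> 'a set \<Rightarrow> bool" where
  "opposite G e f \<longleftrightarrow> (\<exists>v u x w. chordless_sq G v u x w \<and>
     ((e = {v, u} \<and> f = {x, w}) \<or> (e = {x, w} \<and> f = {v, u}) \<or>
      (e = {v, w} \<and> f = {x, u}) \<or> (e = {x, u} \<and> f = {v, w})))"

definition delta :: "'a graph \<Rightarrow> ('a set \<times> 'a set) set" where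
  "delta G = {(e, f). e \<in> edges G \<and> f \<in> edges G \<and>
     ((e \<noteq> f \<and> (\<exists>v u w. e = {v, u} \<and> f = {v, w} \<and> adj G v u \<and> adj G v w \<and>
          \<not> (card (sq_tops G v u w) = 1 \<and> (\<forall>x\<in>sq_tops G v u w. chordless_sq G v u x w))))
      \<or> opposite G e f \<or> e = f)}"

definition d_v :: "'a graph \<Rightarrow> 'a \<Rightarrow> ('a set \<times> 'a set) set" where
  "d_v G v = ((inc_edges G v \<times> edges G) \<union> (edges G \<times> inc_edges G v)) \<inter> delta G"

definition d_v_star :: "'a graph \<Rightarrow> 'a \<Rightarrow> ('a set \<times> 'a set) set" where
  "d_v_star G v = \<Inter> {R. equiv (edges G) R \<and> d_v G v \<subseteq> R}"

definition F_v :: "'a graph \<Rightarrow> 'a \<Rightarrow> 'a set set" where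
  "F_v G v = {f. \<exists>u x w. chordless_sq G v u x w \<and> ({v, u}, {v, w}) \<notin> d_v_star G v \<and>
                 (f = {u, x} \<or> f = {x, w})}"

definition partial_star :: "'a graph \<Rightarrow> 'a \<Rightarrow> 'a graph" where
  "partial_star G v = ({v} \<union> \<Union> (inc_edges G v \<union> F_v G v), inc_edges G v \<union> F_v G v)"

definition d_restr :: "'a graph \<Rightarrow> 'a \<Rightarrow> ('a set \<times> 'a set) set" where
  "d_restr G v = {(e, f) \<in> d_v_star G v. e \<in> edges (partial_star G v) \<and> f \<in> edges (partial_star G v)}"

definition star_classes :: "'a graph \<Rightarrow> 'a \<Rightarrow> 'a set set set" where
  "star_classes G v = {\<phi> \<in> edges G // d_v_star G v. \<phi> \<inter> inc_edges G v \<noteq> {}}"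

definition N_phi :: "'a set set \<Rightarrow> 'a \<Rightarrow> 'a set" where
  "N_phi \<phi> v = {u. {v, u} \<in> \<phi>}"

definition star_factor :: "'a set set \<Rightarrow> 'a \<Rightarrow> 'a graph" where
  "star_factor \<phi> v = (insert v (N_phi \<phi> v), {{v, u} | u. u \<in> N_phi \<phi> v})"

definition cart_prod :: "'i set \<Rightarrow> ('i \<Rightarrow> 'b graph) \<Rightarrow> ('i \<Rightarrow> 'b) graph" where
  "cart_prod I G = (PiE I (\<lambda>i. verts (G i)),
     {{f, g} | f g. f \<in> PiE I (\<lambda>i. verts (G i)) \<and> g \<in> PiE I (\<lambda>i. verts (G i)) \<and>
        (\<exists>i\<in>I. adj (G i) (f i) (g i) \<and> (\<forall>j\<in>I. j \<noteq> i \<longrightarrow> f j = g j))})"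

definition walk :: "'a graph \<Rightarrow> 'a list \<Rightarrow> bool" where
  "walk G p \<longleftrightarrow> p \<noteq> [] \<and> set p \<subseteq> verts G \<and> (\<forall>i < length p - 1. adj G (p ! i) (p ! Suc i))"

definition dist :: "'a graph \<Rightarrow> 'a \<Rightarrow> 'a \<Rightarrow> enat" where
  "dist G x y = (INF p \<in> {p. walk G p \<and> hd p = x \<and> last p = y}. enat (length p - 1))"

definition connected_graph :: "'a graph \<Rightarrow> bool" where
  "connected_graph G \<longleftrightarrow> (\<forall>x\<in>verts G. \<forall>y\<in>verts G. dist G x y \<noteq> \<infinity>)"

definition induced :: "'a graph \<Rightarrow> 'a set \<Rightarrow> 'a graph" where
  "induced G S = (S, {e \<in> edges G. e \<subseteq> S})"

definition N2 :: "'a graph \<Rightarrow> 'a \<Rightarrow> 'a set" where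
  "N2 H x = {y \<in> verts H. dist H x y \<le> 2}"

definition graph_iso :: "('a \<Rightarrow> 'b) \<Rightarrow> 'a graph \<Rightarrow> 'b graph \<Rightarrow> bool" where
  "graph_iso f G H \<longleftrightarrow> bij_betw f (verts G) (verts H) \<and>
     (\<forall>x\<in>verts G. \<forall>y\<in>verts G. adj G x y \<longleftrightarrow> adj H (f x) (f y))"

definition isomorphic :: "'a graph \<Rightarrow> 'b graph \<Rightarrow> bool" where
  "isomorphic G H \<longleftrightarrow> (\<exists>f. graph_iso f G H)"

definition isometric_emb :: "('a \<Rightarrow> 'b) \<Rightarrow> 'a graph \<Rightarrow> 'b graph \<Rightarrow> bool" where
  "isometric_emb f G H \<longleftrightarrow> inj_on f (verts G) \<and> f ` verts G \<subseteq> verts H \<and>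
     (\<forall>x\<in>verts G. \<forall>y\<in>verts G. dist H (f x) (f y) = dist G x y)"

text \<open>Cartesian prime: nontrivial connected graph that is not isomorphic to a product of
  two nontrivial graphs. (Factors of a graph on vertex type 'b embed into 'b, so quantifying
  over 'b-graphs is no restriction.)\<close>
definition prime_graph :: "'b graph \<Rightarrow> bool" where
  "prime_graph G \<longleftrightarrow> simple_graph G \<and> card (verts G) \<ge> 2 \<and> connected_graph G \<and>
     (\<forall>G1 G2 :: 'b graph. simple_graph G1 \<and> simple_graph G2 \<and>
        isomorphic G (cart_prod {0::nat, 1} (\<lambda>i. if i = 0 then G1 else G2)) \<longrightarrow>
        card (verts G1) = 1 \<or> card (verts G2) = 1)"

definition is_PFD :: "'c graph \<Rightarrow> nat set \<Rightarrow> (nat \<Rightarrow> 'c graph) \<Rightarrow> ('c \<Rightarrow> nat \<Rightarrow> 'c) \<Rightarrow> bool" where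
  "is_PFD H I Gs \<psi> \<longleftrightarrow> finite I \<and> (\<forall>i\<in>I. prime_graph (Gs i)) \<and> graph_iso \<psi> H (cart_prod I Gs)"

definition coord_rel :: "'c graph \<Rightarrow> nat set \<Rightarrow> ('c \<Rightarrow> nat \<Rightarrow> 'c) \<Rightarrow> ('c set \<times> 'c set) set" where
  "coord_rel H I \<psi> = {(e, f). e \<in> edges H \<and> f \<in> edges H \<and>
     (\<exists>i\<in>I. (\<exists>a b. e = {a, b} \<and> \<psi> a i \<noteq> \<psi> b i) \<and> (\<exists>a b. f = {a, b} \<and> \<psi> a i \<noteq> \<psi> b i))}"

definition sigma :: "'c graph \<Rightarrow> ('c set \<times> 'c set) set" where
  "sigma H = (case (SOME (I, Gs, \<psi>). is_PFD H I Gs \<psi>) of (I, Gs, \<psi>) \<Rightarrow> coord_rel H I \<psi>)"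

end

theory Submission
  imports Defs
begin

lemma adj_sym: "adj G x y \<longleftrightarrow> adj G y x"
  unfolding adj_def by (auto simp: insert_commute)

lemma doubleton_eq_iff': "{a, b} = {c, d} \<longleftrightarrow> (a = c \<and> b = d) \<or> (a = d \<and> b = c)"
  by (auto simp: doubleton_eq_iff)

lemma cart_prod_verts: "verts (cart_prod I Gs) = PiE I (\<lambda>i. verts (Gs i))"
  by (simp add: cart_prod_def)

lemma cart_prod_adj:
  "adj (cart_prod I Gs) f g \<longleftrightarrow> f \<in> PiE I (\<lambda>i. verts (Gs i)) \<and> g \<in> PiE I (\<lambda>i. verts (Gs i)) \<and>
     (\<exists>i\<in>I. adj (Gs i) (f i) (g i) \<and> (\<forall>j\<in>I. j \<noteq> i \<longrightarrow> f j = g j))"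
proof
  assume a: "adj (cart_prod I Gs) f g"
  then have ne: "f \<noteq> g" and "{f, g} \<in> edges (cart_prod I Gs)" by (auto simp: adj_def)
  then obtain f' g' where e: "{f, g} = {f', g'}" and f': "f' \<in> PiE I (\<lambda>i. verts (Gs i))"
    and g': "g' \<in> PiE I (\<lambda>i. verts (Gs i))"
    and i: "\<exists>i\<in>I. adj (Gs i) (f' i) (g' i) \<and> (\<forall>j\<in>I. j \<noteq> i \<longrightarrow> f' j = g' j)"
    by (auto simp: cart_prod_def)
  from e have "(f = f' \<and> g = g') \<or> (f = g' \<and> g = f')" by (auto simp: doubleton_eq_iff)
  then show "f \<in> PiE I (\<lambda>i. verts (Gs i)) \<and> g \<in> PiE I (\<lambda>i. verts (Gs i)) \<and>
     (\<exists>i\<in>I. adj (Gs i) (f i) (g i) \<and> (\<forall>j\<in>I. j \<noteq> i \<longrightarrow> f j = g j))"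
    using f' g' i adj_sym by metis
next
  assume a: "f \<in> PiE I (\<lambda>i. verts (Gs i)) \<and> g \<in> PiE I (\<lambda>i. verts (Gs i)) \<and>
     (\<exists>i\<in>I. adj (Gs i) (f i) (g i) \<and> (\<forall>j\<in>I. j \<noteq> i \<longrightarrow> f j = g j))"
  then have "f \<noteq> g" by (auto simp: adj_def)
  with a show "adj (cart_prod I Gs) f g" by (auto simp: adj_def cart_prod_def)
qed

lemma walk_single: "walk G [x] \<longleftrightarrow> x \<in> verts G"
  by (simp add: walk_def)

lemma walk_Cons2: "walk G (x # y # p) \<longleftrightarrow> x \<in> verts G \<and> adj G x y \<and> walk G (y # p)"
proof -
  have "(\<forall>i < length (x # y # p) - 1. adj G ((x # y # p) ! i) ((x # y # p) ! Suc i)) \<longleftrightarrow>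
        adj G x y \<and> (\<forall>i < length (y # p) - 1. adj G ((y # p) ! i) ((y # p) ! Suc i))"
    (is "?L \<longleftrightarrow> ?R")
  proof
    assume ?L then show ?R
      by (auto simp: less_Suc_eq_0_disj nth_Cons split: nat.splits)
  next
    assume r: ?R show ?L
    proof (intro allI impI)
      fix i assume "i < length (x # y # p) - 1"
      then show "adj G ((x # y # p) ! i) ((x # y # p) ! Suc i)"
        using r by (cases i) auto
    qed
  qed
  then show ?thesis by (auto simp: walk_def)
qed

lemma dist_le_walk:
  assumes "walk G p" "hd p = x" "last p = y"
  shows "dist G x y \<le> enat (length p - 1)"
  unfolding dist_def by (rule INF_lower) (use assms in auto)

lemma dist_ge:
  assumes "\<And>p. walk G p \<Longrightarrow> hd p = x \<Longrightarrow> last p = y \<Longrightarrow> n \<le> length p - 1"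
  shows "enat n \<le> dist G x y"
  unfolding dist_def by (rule INF_greatest) (use assms in auto)

lemma dist_finite_walk:
  assumes "dist G x y \<noteq> \<infinity>"
  shows "\<exists>p. walk G p \<and> hd p = x \<and> last p = y"
  using assms unfolding dist_def by (auto simp: top_enat_def[symmetric])

lemma walk_map:
  assumes "\<And>x. x \<in> verts G \<Longrightarrow> f x \<in> verts H"
    and "\<And>x y. x \<in> verts G \<Longrightarrow> y \<in> verts G \<Longrightarrow> adj G x y \<Longrightarrow> adj H (f x) (f y)"
    and "walk G p"
  shows "walk H (map f p)"
  using assms(3)
proof (induction p rule: induct_list012)
  case 1 then show ?case by (simp add: walk_def)
next
  case (2 x) then show ?case using assms(1) by (simp add: walk_single)
next
  case (3 x y zs)
  then have "y \<in> verts G" by (auto simp: walk_def)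
  with 3 show ?case using assms(1,2) by (auto simp: walk_Cons2)
qed

lemma dist_hom:
  assumes "\<And>x. x \<in> verts G \<Longrightarrow> f x \<in> verts H"
    and "\<And>x y. x \<in> verts G \<Longrightarrow> y \<in> verts G \<Longrightarrow> adj G x y \<Longrightarrow> adj H (f x) (f y)"
  shows "dist H (f x) (f y) \<le> dist G x y"
  unfolding dist_def[of G]
proof (rule INF_greatest)
  fix p assume "p \<in> {p. walk G p \<and> hd p = x \<and> last p = y}"
  then have w: "walk G p" "hd p = x" "last p = y" by auto
  then have "p \<noteq> []" by (auto simp: walk_def)
  have "walk H (map f p)" by (rule walk_map[OF assms w(1)])
  moreover have "hd (map f p) = f x" "last (map f p) = f y" using w \<open>p \<noteq> []\<close>
    by (auto simp: hd_map last_map)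
  ultimately show "dist H (f x) (f y) \<le> enat (length p - 1)"
    using dist_le_walk by fastforce
qed


lemma equiv_Inter_closure:
  assumes "D \<subseteq> A \<times> A"
  shows "equiv A (\<Inter> {R. equiv A R \<and> D \<subseteq> R})" and "D \<subseteq> \<Inter> {R. equiv A R \<and> D \<subseteq> R}"
proof -
  let ?F = "{R. equiv A R \<and> D \<subseteq> R}"
  have ne: "A \<times> A \<in> ?F" using assms by (auto simp: equiv_def refl_on_def sym_def trans_def)
  show "D \<subseteq> \<Inter> ?F" by auto
  have r: "refl_on A (\<Inter> ?F)" using ne by (auto simp: equiv_def refl_on_def)
  have s: "sym (\<Inter> ?F)" by (auto simp: equiv_def sym_def)
  have t: "trans (\<Inter> ?F)"
  proof (rule transI)
    fix x y z assume a: "(x, y) \<in> \<Inter> ?F" "(y, z) \<in> \<Inter> ?F"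
    show "(x, z) \<in> \<Inter> ?F"
    proof
      fix Q assume "Q \<in> ?F"
      then have "trans Q" "(x, y) \<in> Q" "(y, z) \<in> Q" using a by (auto simp: equiv_def)
      then show "(x, z) \<in> Q" by (meson transD)
    qed
  qed
  have u: "\<Inter> ?F \<subseteq> A \<times> A" using ne by blast
  show "equiv A (\<Inter> ?F)" using r s t u by (simp add: equiv_def)
qed

lemma delta_edges: "(e, f) \<in> delta G \<Longrightarrow> e \<in> edges G \<and> f \<in> edges G"
  by (auto simp: delta_def)

locale setting =
  fixes G :: "'a graph" and v :: 'a
  assumes sg: "simple_graph G" and vV: "v \<in> verts G"
begin

abbreviation "R \<equiv> d_v_star G v"
abbreviation "C \<equiv> star_classes G v"
definition cls :: "'a \<Rightarrow> 'a set set" where "cls u = R `` {{v, u}}"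
definition Pq :: "'a \<Rightarrow> 'a \<Rightarrow> 'a \<Rightarrow> bool" where
  "Pq u x w \<longleftrightarrow> chordless_sq G v u x w \<and> cls u \<noteq> cls w"

lemma finV: "finite (verts G)" using sg by (simp add: simple_graph_def)

lemma edge_form: "e \<in> edges G \<Longrightarrow> \<exists>x y. x \<noteq> y \<and> x \<in> verts G \<and> y \<in> verts G \<and> e = {x, y}"
  using sg by (auto simp: simple_graph_def)

lemma adjD: "adj G x y \<Longrightarrow> x \<in> verts G \<and> y \<in> verts G \<and> x \<noteq> y \<and> {x, y} \<in> edges G"
proof -
  assume a: "adj G x y"
  then have "{x, y} \<in> edges G" "x \<noteq> y" by (auto simp: adj_def)
  then obtain p q where "p \<noteq> q" "p \<in> verts G" "q \<in> verts G" "{x, y} = {p, q}" using edge_form by blast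
  then show ?thesis using a by (auto simp: adj_def doubleton_eq_iff)
qed

lemma edge_v: "{v, u} \<in> edges G \<Longrightarrow> adj G v u"
proof -
  assume a: "{v, u} \<in> edges G"
  then obtain p q where "p \<noteq> q" "{v, u} = {p, q}" using edge_form by blast
  then have "v \<noteq> u" by (auto simp: doubleton_eq_iff)
  with a show ?thesis by (simp add: adj_def)
qed

lemma dv_sub: "d_v G v \<subseteq> edges G \<times> edges G"
  by (auto simp: d_v_def delta_def)

lemma R_equiv: "equiv (edges G) R"
  unfolding d_v_star_def by (rule equiv_Inter_closure(1)[OF dv_sub])

lemma dv_R: "d_v G v \<subseteq> R"
  unfolding d_v_star_def by (rule equiv_Inter_closure(2)[OF dv_sub])

lemma delta_R: "(e, f) \<in> delta G \<Longrightarrow> v \<in> e \<or> v \<in> f \<Longrightarrow> (e, f) \<in> R"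
  using dv_R delta_edges[of e f G] by (auto simp: d_v_def inc_edges_def)

lemma R_edges: "(e, f) \<in> R \<Longrightarrow> e \<in> edges G \<and> f \<in> edges G"
  using R_equiv by (auto simp: equiv_def refl_on_def)

lemma R_sym: "(e, f) \<in> R \<Longrightarrow> (f, e) \<in> R"
  using R_equiv by (auto simp: equiv_def sym_def)

lemma R_trans: "(e, f) \<in> R \<Longrightarrow> (f, g) \<in> R \<Longrightarrow> (e, g) \<in> R"
  using R_equiv by (auto simp: equiv_def trans_def)

lemma R_refl: "e \<in> edges G \<Longrightarrow> (e, e) \<in> R"
  using R_equiv by (auto simp: equiv_def refl_on_def)

lemma cls_eq_iff:
  assumes "adj G v u" "adj G v w"
  shows "cls u = cls w \<longleftrightarrow> ({v, u}, {v, w}) \<in> R"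
  unfolding cls_def
proof
  assume "R `` {{v, u}} = R `` {{v, w}}"
  moreover have "({v, w}, {v, w}) \<in> R" using assms adjD R_refl by blast
  ultimately show "({v, u}, {v, w}) \<in> R" by blast
next
  assume "({v, u}, {v, w}) \<in> R"
  then show "R `` {{v, u}} = R `` {{v, w}}"
    using R_equiv equiv_class_eq by metis
qed

lemma cls_in_C: "adj G v u \<Longrightarrow> cls u \<in> C"
proof -
  assume a: "adj G v u"
  then have e: "{v, u} \<in> edges G" using adjD by blast
  then have "cls u \<in> edges G // R" unfolding cls_def by (rule quotientI)
  moreover have "{v, u} \<in> cls u \<inter> inc_edges G v"
    using e R_refl by (auto simp: cls_def inc_edges_def)
  ultimately show ?thesis by (auto simp: star_classes_def)
qed

lemma C_N: "\<phi> \<in> C \<Longrightarrow> u \<in> N_phi \<phi> v \<longleftrightarrow> adj G v u \<and> cls u = \<phi>"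
proof -
  assume p: "\<phi> \<in> C"
  then have q: "\<phi> \<in> edges G // R" by (simp add: star_classes_def)
  show ?thesis
  proof
    assume "u \<in> N_phi \<phi> v"
    then have m: "{v, u} \<in> \<phi>" by (simp add: N_phi_def)
    with q have "{v, u} \<in> edges G" using R_equiv in_quotient_imp_subset by blast
    then have "adj G v u" by (rule edge_v)
    moreover have "cls u = \<phi>" unfolding cls_def
      using q m R_equiv by (metis Image_singleton_iff equiv_class_eq_iff quotientE)
    ultimately show "adj G v u \<and> cls u = \<phi>" by simp
  next
    assume "adj G v u \<and> cls u = \<phi>"
    then show "u \<in> N_phi \<phi> v" using adjD R_refl by (auto simp: N_phi_def cls_def)
  qed
qed

lemma C_ex: "\<phi> \<in> C \<Longrightarrow> \<exists>u. adj G v u \<and> cls u = \<phi>"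
proof -
  assume p: "\<phi> \<in> C"
  then obtain e where e: "e \<in> \<phi>" "e \<in> edges G" "v \<in> e"
    by (auto simp: star_classes_def inc_edges_def)
  then obtain x y where "x \<noteq> y" "e = {x, y}" using edge_form by blast
  then obtain u where "e = {v, u}" using e by auto
  then have "u \<in> N_phi \<phi> v" using e by (simp add: N_phi_def)
  then show ?thesis using C_N p by blast
qed

lemma finC: "finite C"
proof -
  have "finite (edges G)" using finV sg
    by (metis (no_types, lifting) Pow_iff finite_Pow_iff rev_finite_subset subsetI edge_form insert_subset empty_subsetI)
  then have "finite (edges G // R)" by (simp add: finite_quotient[OF _ equiv_type[OF R_equiv]])
  then show ?thesis by (rule rev_finite_subset) (auto simp: star_classes_def)
qed

lemma chordless_sym: "chordless_sq G v u x w \<longleftrightarrow> chordless_sq G v w x u"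
  unfolding chordless_sq_def using adj_sym by (auto simp: adj_sym)

lemma chordless_adj: "chordless_sq G v u x w \<Longrightarrow> adj G v u \<and> adj G v w \<and> adj G u x \<and> adj G w x
   \<and> \<not> adj G v x \<and> \<not> adj G u w \<and> distinct [v, u, x, w]"
  unfolding chordless_sq_def using adj_sym by (auto simp: adj_sym)

lemma Pq_sym: "Pq u x w \<longleftrightarrow> Pq w x u"
  unfolding Pq_def using chordless_sym by auto

lemma K1:
  assumes "adj G v u" "adj G v w" "cls u \<noteq> cls w"
  shows "u \<noteq> w" "card (sq_tops G v u w) = 1" "\<forall>x\<in>sq_tops G v u w. chordless_sq G v u x w"
proof -
  show uw: "u \<noteq> w" using assms by auto
  have nd: "({v, u}, {v, w}) \<notin> delta G"
  proof
    assume "({v, u}, {v, w}) \<in> delta G"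
    then have "({v, u}, {v, w}) \<in> R" by (rule delta_R) simp
    then show False using assms cls_eq_iff by blast
  qed
  have e: "{v, u} \<in> edges G" "{v, w} \<in> edges G" using assms adjD by auto
  have ne: "{v, u} \<noteq> {v, w}" using uw by (auto simp: doubleton_eq_iff)
  from nd e ne assms(1,2)
  have "card (sq_tops G v u w) = 1 \<and> (\<forall>x\<in>sq_tops G v u w. chordless_sq G v u x w)"
    unfolding delta_def by blast
  then show "card (sq_tops G v u w) = 1" "\<forall>x\<in>sq_tops G v u w. chordless_sq G v u x w" by auto
qed

lemma K1_ex:
  assumes "adj G v u" "adj G v w" "cls u \<noteq> cls w"
  shows "\<exists>x. Pq u x w"
proof -
  from K1[OF assms] obtain x where "x \<in> sq_tops G v u w" "chordless_sq G v u x w"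
    by (metis card_1_singletonE insertI1)
  then show ?thesis using assms(3) by (auto simp: Pq_def)
qed

lemma K1_uniq:
  assumes "Pq u x w" "Pq u y w"
  shows "x = y"
proof -
  have a: "adj G v u" "adj G v w" "cls u \<noteq> cls w" using assms(1) chordless_adj by (auto simp: Pq_def)
  have "x \<in> sq_tops G v u w" "y \<in> sq_tops G v u w"
    using assms by (auto simp: Pq_def sq_tops_def chordless_sq_def)
  with K1(2)[OF a] show ?thesis by (metis card_1_singletonE singletonD)
qed

lemma K2:
  assumes "chordless_sq G v u x w"
  shows "({v, u}, {x, w}) \<in> R" "({v, w}, {x, u}) \<in> R"
proof -
  have e: "{v, u} \<in> edges G" "{x, w} \<in> edges G" "{v, w} \<in> edges G" "{x, u} \<in> edges G"
    using assms chordless_adj adjD by (metis insert_commute)+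
  have "opposite G {v, u} {x, w}" "opposite G {v, w} {x, u}"
    using assms unfolding opposite_def by blast+
  then have "({v, u}, {x, w}) \<in> delta G" "({v, w}, {x, u}) \<in> delta G"
    using e by (auto simp: delta_def)
  then show "({v, u}, {x, w}) \<in> R" "({v, w}, {x, u}) \<in> R" using delta_R by auto
qed

lemma K3:
  assumes "Pq u x w" "adj G v y" "adj G x y"
  shows "y = u \<or> y = w"
proof (rule ccontr)
  assume ny: "\<not> (y = u \<or> y = w)"
  have c: "chordless_sq G v u x w" "cls u \<noteq> cls w" using assms(1) by (auto simp: Pq_def)
  note ca = chordless_adj[OF c(1)]
  have yv: "y \<noteq> v" "y \<noteq> x" using assms adjD by blast+
  have sub: "{u, y} \<subseteq> sq_tops G w v x"
    using ca ny yv assms(2,3) by (auto simp: sq_tops_def adj_sym)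
  have fin: "finite (sq_tops G w v x)"
    by (rule rev_finite_subset[OF finV]) (auto simp: sq_tops_def dest: adjD)
  have "card {u, y} = 2" using ny by auto
  then have "card (sq_tops G w v x) \<noteq> 1" using card_mono[OF fin sub] by auto
  moreover have e: "{w, v} \<in> edges G" "{w, x} \<in> edges G" using ca adjD adj_sym by metis+
  moreover have "{w, v} \<noteq> {w, x}" using ca by (auto simp: doubleton_eq_iff)
  moreover have "adj G w v" "adj G w x" using ca adj_sym[of G v w] by auto
  ultimately have "({w, v}, {w, x}) \<in> delta G" unfolding delta_def by blast
  then have r1: "({w, v}, {w, x}) \<in> R" by (rule delta_R) simp
  have r2: "({v, u}, {x, w}) \<in> R" by (rule K2(1)[OF c(1)])
  have "({v, u}, {v, w}) \<in> R"
    using R_trans[OF r2 R_sym[OF r1[unfolded insert_commute[of w v] insert_commute[of w x]]]]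
    by (simp add: insert_commute)
  then have "cls u = cls w" using cls_eq_iff ca by blast
  with c(2) show False by simp
qed

end

definition ins1 :: "'x set \<Rightarrow> 'x set \<Rightarrow> bool" where
  "ins1 X Y \<longleftrightarrow> (\<exists>u. u \<notin> X \<and> Y = insert u X)"

context setting
begin

abbreviation "S \<equiv> partial_star G v"
definition "Nv = {u. adj G v u}"
definition "Tset = {x. \<exists>u w. Pq u x w}"
definition Ws :: "'a \<Rightarrow> 'a set" where
  "Ws s = (if s = v then {} else if adj G v s then {s} else {u. adj G v u \<and> adj G u s})"
definition tv :: "'a set \<Rightarrow> bool" where
  "tv Z \<longleftrightarrow> Z \<subseteq> Nv \<and> (\<forall>p\<in>Z. \<forall>q\<in>Z. cls p = cls q \<longrightarrow> p = q)"

lemma PqD: "Pq a x b \<Longrightarrow> x \<noteq> v \<and> \<not> adj G v x \<and> adj G v a \<and> adj G v b \<and> a \<noteq> b \<and> cls a \<noteq> cls b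
   \<and> adj G a x \<and> adj G b x \<and> a \<noteq> x \<and> b \<noteq> x \<and> a \<noteq> v \<and> b \<noteq> v \<and> \<not> adj G a b"
  using chordless_adj[of a x b] unfolding Pq_def by auto

lemma finNv: "finite Nv"
  by (rule rev_finite_subset[OF finV]) (auto simp: Nv_def dest: adjD)

lemma tv_fin: "tv Z \<Longrightarrow> finite Z"
  using finNv by (auto simp: tv_def intro: rev_finite_subset)

lemma tv_sub: "tv Z \<Longrightarrow> Y \<subseteq> Z \<Longrightarrow> tv Y"
  unfolding tv_def by blast

lemma F_eq: "F_v G v = {f. \<exists>u x w. Pq u x w \<and> (f = {u, x} \<or> f = {x, w})}"
proof -
  have "chordless_sq G v u x w \<Longrightarrow> ({v, u}, {v, w}) \<notin> R \<longleftrightarrow> cls u \<noteq> cls w" for u x w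
    using cls_eq_iff chordless_adj by blast
  then show ?thesis unfolding F_v_def Pq_def by blast
qed

lemma inc_eq: "inc_edges G v = {{v, u} | u. adj G v u}"
proof -
  have "e \<in> inc_edges G v \<longleftrightarrow> (\<exists>u. e = {v, u} \<and> adj G v u)" for e
  proof
    assume "e \<in> inc_edges G v"
    then have e: "e \<in> edges G" "v \<in> e" by (auto simp: inc_edges_def)
    then obtain x y where "x \<noteq> y" "e = {x, y}" using edge_form by blast
    then obtain u where "e = {v, u}" using e by auto
    then show "\<exists>u. e = {v, u} \<and> adj G v u" using e edge_v by blast
  next
    assume "\<exists>u. e = {v, u} \<and> adj G v u"
    then show "e \<in> inc_edges G v" using adjD by (auto simp: inc_edges_def)
  qed
  then show ?thesis by blast
qed

lemma edgesS: "edges S = {{v, u} | u. adj G v u} \<union> {f. \<exists>u x w. Pq u x w \<and> (f = {u, x} \<or> f = {x, w})}"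
  by (simp add: partial_star_def inc_eq F_eq)

lemma vertsS: "verts S = {v} \<union> Nv \<union> Tset"
proof -
  have "verts S = {v} \<union> \<Union> (edges S)" by (simp add: partial_star_def)
  also have "\<dots> = {v} \<union> Nv \<union> Tset"
  proof
    show "{v} \<union> \<Union> (edges S) \<subseteq> {v} \<union> Nv \<union> Tset"
    proof
      fix y assume "y \<in> {v} \<union> \<Union> (edges S)"
      then consider "y = v" | u where "adj G v u" "y \<in> {v, u}"
        | u x w where "Pq u x w" "y \<in> {u, x} \<or> y \<in> {x, w}"
        unfolding edgesS by blast
      then show "y \<in> {v} \<union> Nv \<union> Tset"
      proof cases
        case 1 then show ?thesis by simp
      next
        case 2 then show ?thesis by (auto simp: Nv_def)
      next
        case 3
        have "x \<in> Tset" using 3(1) by (auto simp: Tset_def)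
        moreover have "u \<in> Nv" "w \<in> Nv" using PqD[OF 3(1)] by (auto simp: Nv_def)
        ultimately show ?thesis using 3(2) by auto
      qed
    qed
  next
    have "Nv \<subseteq> \<Union> (edges S)" unfolding edgesS Nv_def by blast
    moreover have "Tset \<subseteq> \<Union> (edges S)" unfolding edgesS Tset_def by blast
    ultimately show "{v} \<union> Nv \<union> Tset \<subseteq> {v} \<union> \<Union> (edges S)" by blast
  qed
  finally show ?thesis .
qed

lemma Ws_v: "Ws v = {}" by (simp add: Ws_def)
lemma Ws_N: "adj G v u \<Longrightarrow> Ws u = {u}" using adjD by (auto simp: Ws_def)
lemma Ws_T: "Pq a x b \<Longrightarrow> Ws x = {a, b}"
proof -
  assume p: "Pq a x b"
  note d = PqD[OF p]
  have "{u. adj G v u \<and> adj G u x} = {a, b}"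
  proof
    show "{u. adj G v u \<and> adj G u x} \<subseteq> {a, b}" using K3[OF p] adj_sym by fastforce
    show "{a, b} \<subseteq> {u. adj G v u \<and> adj G u x}" using d by auto
  qed
  then show ?thesis using d by (simp add: Ws_def)
qed

lemma vertsS_cases:
  assumes "s \<in> verts S"
  obtains "s = v" | "adj G v s" | a b where "Pq a s b"
  using assms unfolding vertsS Nv_def Tset_def by blast

lemma Ws_tv: "s \<in> verts S \<Longrightarrow> tv (Ws s) \<and> card (Ws s) \<le> 2"
proof (erule vertsS_cases)
  assume "s = v" then show ?thesis by (simp add: Ws_v tv_def)
next
  assume "adj G v s" then show ?thesis by (simp add: Ws_N tv_def Nv_def)
next
  fix a b assume p: "Pq a s b"
  note d = PqD[OF p]
  show ?thesis using d by (auto simp: Ws_T[OF p] tv_def Nv_def card_insert_if)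
qed

lemma v_notT: "v \<notin> Tset" using PqD by (auto simp: Tset_def)
lemma T_notN: "x \<in> Tset \<Longrightarrow> \<not> adj G v x" using PqD by (auto simp: Tset_def)

lemma Ws_card:
  assumes "s \<in> verts S"
  shows "card (Ws s) = 0 \<longleftrightarrow> s = v" "card (Ws s) = 1 \<longleftrightarrow> adj G v s"
    "card (Ws s) = 2 \<longleftrightarrow> s \<in> Tset"
proof -
  have "(card (Ws s) = 0 \<longleftrightarrow> s = v) \<and> (card (Ws s) = 1 \<longleftrightarrow> adj G v s) \<and> (card (Ws s) = 2 \<longleftrightarrow> s \<in> Tset)"
    using assms
  proof (cases rule: vertsS_cases)
    case 1
    then show ?thesis using v_notT by (simp add: Ws_v adj_def)
  next
    case 2
    then have "s \<noteq> v" "s \<notin> Tset" using T_notN adjD by blast+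
    then show ?thesis using 2 by (simp add: Ws_N)
  next
    case (3 a b)
    note d = PqD[OF 3]
    have "s \<in> Tset" using 3 by (auto simp: Tset_def)
    then show ?thesis using d by (simp add: Ws_T[OF 3])
  qed
  then show "card (Ws s) = 0 \<longleftrightarrow> s = v" "card (Ws s) = 1 \<longleftrightarrow> adj G v s"
    "card (Ws s) = 2 \<longleftrightarrow> s \<in> Tset" by auto
qed

lemma Ws_inj:
  assumes "s \<in> verts S" "t \<in> verts S" "Ws s = Ws t"
  shows "s = t"
  using assms(1)
proof (cases rule: vertsS_cases)
  case 1
  then have "card (Ws t) = 0" using assms(3) Ws_v by simp
  then show ?thesis using Ws_card(1)[OF assms(2)] 1 by simp
next
  case 2
  then have "card (Ws t) = 1" using assms(3)[symmetric] Ws_N by simp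
  then have "adj G v t" using Ws_card(2)[OF assms(2)] by simp
  then show ?thesis using 2 assms(3) by (simp add: Ws_N)
next
  case (3 a b)
  have "s \<in> Tset" using 3 by (auto simp: Tset_def)
  then have "card (Ws t) = 2" using assms(3)[symmetric] Ws_card(3)[OF assms(1)] by simp
  then have "t \<in> Tset" using Ws_card(3)[OF assms(2)] by simp
  then obtain c d where cd: "Pq c t d" by (auto simp: Tset_def)
  have "{a, b} = {c, d}" using Ws_T[OF 3] Ws_T[OF cd] assms(3) by simp
  then have "(a = c \<and> b = d) \<or> (a = d \<and> b = c)" by (auto simp: doubleton_eq_iff)
  then show ?thesis
  proof
    assume "a = c \<and> b = d"
    then show ?thesis using K1_uniq[OF 3] cd by simp
  next
    assume e: "a = d \<and> b = c"
    have "Pq a t b" using cd Pq_sym e by simp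
    then show ?thesis using K1_uniq[OF 3] by simp
  qed
qed

lemma Ws_surj:
  assumes "tv Z" "card Z \<le> 2"
  shows "\<exists>s\<in>verts S. Ws s = Z"
proof -
  have fin: "finite Z" using tv_fin assms(1) .
  consider "card Z = 0" | "card Z = 1" | "card Z = 2" using assms(2) by linarith
  then show ?thesis
  proof cases
    case 1 then have "Z = {}" using fin by simp
    have "v \<in> verts S" by (simp add: vertsS)
    then show ?thesis using Ws_v \<open>Z = {}\<close> by blast
  next
    case 2 then obtain u where u: "Z = {u}" using card_1_singletonE by blast
    then have "adj G v u" using assms(1) by (auto simp: tv_def Nv_def)
    then have "u \<in> verts S" "Ws u = Z" using u Ws_N by (auto simp: vertsS Nv_def)
    then show ?thesis by blast
  next
    case 3 then obtain a b where ab: "Z = {a, b}" "a \<noteq> b" using card_2_iff[THEN iffD1] by blast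
    then have "adj G v a" "adj G v b" "cls a \<noteq> cls b" using assms(1) by (auto simp: tv_def Nv_def)
    then obtain x where x: "Pq a x b" using K1_ex by blast
    have "x \<in> Tset" using x by (auto simp: Tset_def)
    then have "x \<in> verts S" by (simp add: vertsS)
    then show ?thesis using Ws_T[OF x] ab by blast
  qed
qed

lemma ins1_empty: "ins1 {} {u}" by (auto simp: ins1_def)
lemma ins1_pair: "u \<noteq> w \<Longrightarrow> ins1 {u} {u, w} \<and> ins1 {w} {u, w}"
  unfolding ins1_def by (metis insert_commute singletonD)

lemma adjS:
  "adj S s t \<longleftrightarrow> s \<in> verts S \<and> t \<in> verts S \<and> (ins1 (Ws s) (Ws t) \<or> ins1 (Ws t) (Ws s))"
proof
  assume a: "adj S s t"
  then have st: "s \<noteq> t" "{s, t} \<in> edges S" by (auto simp: adj_def)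
  then have vs: "s \<in> verts S" "t \<in> verts S" by (auto simp: partial_star_def)
  have "ins1 (Ws s) (Ws t) \<or> ins1 (Ws t) (Ws s)"
    using st(2) unfolding edgesS
  proof
    assume "{s, t} \<in> {{v, u} |u. adj G v u}"
    then obtain u where u: "{s, t} = {v, u}" "adj G v u" by blast
    then have "(s = v \<and> t = u) \<or> (s = u \<and> t = v)" by (auto simp: doubleton_eq_iff)
    then show ?thesis
    proof (elim disjE conjE)
      assume "s = v" "t = u" then show ?thesis using Ws_v Ws_N[OF u(2)] ins1_empty[of u] by simp
    next
      assume "s = u" "t = v" then show ?thesis using Ws_v Ws_N[OF u(2)] ins1_empty[of u] by simp
    qed
  next
    assume "{s, t} \<in> {f. \<exists>u x w. Pq u x w \<and> (f = {u, x} \<or> f = {x, w})}"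
    then obtain u x w where p: "Pq u x w" "{s, t} = {u, x} \<or> {s, t} = {x, w}" by blast
    have p': "Pq w x u" using p Pq_sym by blast
    note d = PqD[OF p(1)]
    have W: "Ws x = {u, w}" "Ws u = {u}" "Ws w = {w}" using Ws_T[OF p(1)] Ws_N d by auto
    from p(2) show ?thesis
    proof
      assume "{s, t} = {u, x}"
      then have "(s = u \<and> t = x) \<or> (s = x \<and> t = u)" by (auto simp: doubleton_eq_iff)
      then show ?thesis using W ins1_pair[of u w] d by auto
    next
      assume "{s, t} = {x, w}"
      then have "(s = x \<and> t = w) \<or> (s = w \<and> t = x)" by (auto simp: doubleton_eq_iff)
      then show ?thesis using W ins1_pair[of u w] d by auto
    qed
  qed
  then show "s \<in> verts S \<and> t \<in> verts S \<and> (ins1 (Ws s) (Ws t) \<or> ins1 (Ws t) (Ws s))" using vs by blast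
next
  have one: "adj S s t" if vs: "s \<in> verts S" "t \<in> verts S" and i: "ins1 (Ws s) (Ws t)" for s t
  proof -
    obtain u where u: "u \<notin> Ws s" "Ws t = insert u (Ws s)" using i by (auto simp: ins1_def)
    have ct: "card (Ws t) = Suc (card (Ws s))" using u Ws_tv[OF vs(1)] tv_fin by simp
    show ?thesis using vs(1)
    proof (cases rule: vertsS_cases)
      case 1
      then have "Ws t = {u}" using u Ws_v by simp
      moreover have "u \<in> verts S" "Ws u = {u}" "adj G v u"
        using Ws_tv[OF vs(2)] calculation by (auto simp: tv_def Nv_def vertsS Ws_N)
      ultimately have "t = u" using Ws_inj vs by metis
      then have "{s, t} \<in> edges S" unfolding edgesS using 1 \<open>adj G v u\<close> by blast
      moreover have "s \<noteq> t" using 1 \<open>t = u\<close> \<open>adj G v u\<close> adjD by blast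
      ultimately show ?thesis by (simp add: adj_def)
    next
      case 2
      then have "card (Ws t) = 2" using ct Ws_N by simp
      then have "t \<in> Tset" using Ws_card vs by blast
      then obtain c d where cd: "Pq c t d" by (auto simp: Tset_def)
      have "{c, d} = {u, s}" using Ws_T[OF cd] u Ws_N[OF 2] by simp
      then have "(c = s) \<or> (d = s)" by (auto simp: doubleton_eq_iff)
      then have "{s, t} \<in> edges S" using cd unfolding edgesS by (auto simp: insert_commute)
      moreover have "s \<noteq> t" using 2 PqD[OF cd] by auto
      ultimately show ?thesis by (simp add: adj_def)
    next
      case (3 a b)
      then have "card (Ws t) = 3" using ct Ws_T[OF 3] PqD[OF 3] by simp
      then show ?thesis using Ws_tv[OF vs(2)] by simp
    qed
  qed
  assume "s \<in> verts S \<and> t \<in> verts S \<and> (ins1 (Ws s) (Ws t) \<or> ins1 (Ws t) (Ws s))"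
  then show "adj S s t" using one adj_sym by metis
qed

lemma step_set:
  assumes "tv X" "tv Y" "card X \<le> 2" "card Y \<le> 2" "X \<noteq> Y"
  shows "\<exists>X'. tv X' \<and> card X' \<le> 2 \<and> (ins1 X X' \<or> ins1 X' X) \<and>
     Suc (card ((X' - Y) \<union> (Y - X'))) = card ((X - Y) \<union> (Y - X))"
proof -
  have fX: "finite X" and fY: "finite Y" using assms tv_fin by auto
  show ?thesis
  proof (cases "X - Y = {}")
    case False
    then obtain a where a: "a \<in> X" "a \<notin> Y" by blast
    let ?X' = "X - {a}"
    have "(?X' - Y) \<union> (Y - ?X') = ((X - Y) \<union> (Y - X)) - {a}" using a by auto
    moreover have "a \<in> (X - Y) \<union> (Y - X)" using a by auto
    moreover have "finite ((X - Y) \<union> (Y - X))" using fX fY by auto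
    ultimately have "Suc (card ((?X' - Y) \<union> (Y - ?X'))) = card ((X - Y) \<union> (Y - X))"
      by (metis card_Suc_Diff1)
    moreover have "tv ?X'" using assms(1) tv_sub by blast
    moreover have "card ?X' \<le> 2" using assms(3) card_mono[OF fX, of ?X'] by auto
    moreover have "ins1 ?X' X" using a unfolding ins1_def by (intro exI[of _ a]) auto
    ultimately show ?thesis by blast
  next
    case True
    then have "X \<subseteq> Y" by blast
    then obtain b where b: "b \<in> Y" "b \<notin> X" using assms(5) by blast
    let ?X' = "insert b X"
    have "(?X' - Y) \<union> (Y - ?X') = ((X - Y) \<union> (Y - X)) - {b}" using b \<open>X \<subseteq> Y\<close> by auto
    moreover have "b \<in> (X - Y) \<union> (Y - X)" using b by auto
    moreover have "finite ((X - Y) \<union> (Y - X))" using fX fY by auto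
    ultimately have "Suc (card ((?X' - Y) \<union> (Y - ?X'))) = card ((X - Y) \<union> (Y - X))"
      by (metis card_Suc_Diff1)
    moreover have sub: "?X' \<subseteq> Y" using b \<open>X \<subseteq> Y\<close> by auto
    moreover have "tv ?X'" using assms(2) tv_sub sub by blast
    moreover have "card ?X' \<le> 2" using assms(4) card_mono[OF fY sub] by linarith
    moreover have "ins1 X ?X'" using b unfolding ins1_def by blast
    ultimately show ?thesis by blast
  qed
qed

lemma walkS_exists:
  assumes "s \<in> verts S" "t \<in> verts S"
  shows "\<exists>p. walk S p \<and> hd p = s \<and> last p = t \<and> length p - 1 = card ((Ws s - Ws t) \<union> (Ws t - Ws s))"
  using assms
proof (induction "card ((Ws s - Ws t) \<union> (Ws t - Ws s))" arbitrary: s)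
  case 0
  have "finite ((Ws s - Ws t) \<union> (Ws t - Ws s))" using Ws_tv 0 tv_fin by blast
  then have "Ws s = Ws t" using 0(1) by auto
  then have "s = t" using Ws_inj 0 by blast
  then show ?case using 0 by (intro exI[of _ "[s]"]) (auto simp: walk_single)
next
  case (Suc n)
  have ne: "Ws s \<noteq> Ws t" using Suc(2) by auto
  obtain X' where X': "tv X'" "card X' \<le> 2" "ins1 (Ws s) X' \<or> ins1 X' (Ws s)"
     "Suc (card ((X' - Ws t) \<union> (Ws t - X'))) = card ((Ws s - Ws t) \<union> (Ws t - Ws s))"
    using step_set[OF _ _ _ _ ne] Ws_tv Suc.prems by blast
  obtain s' where s': "s' \<in> verts S" "Ws s' = X'" using Ws_surj X' by blast
  have "adj S s s'" using adjS s' X' Suc.prems by blast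
  have "n = card ((Ws s' - Ws t) \<union> (Ws t - Ws s'))" using X'(4) Suc(2) s'(2) by simp
  then obtain p where p: "walk S p" "hd p = s'" "last p = t" "length p - 1 = n"
    using Suc.hyps(1) s'(1) Suc.prems(2) by blast
  then obtain q where q: "p = s' # q" by (cases p) (auto simp: walk_def)
  have "walk S (s # p)" using p q \<open>adj S s s'\<close> Suc.prems(1) by (simp add: walk_Cons2)
  then show ?case using p q Suc(2) by (intro exI[of _ "s # p"]) auto
qed

lemma distS_le:
  assumes "s \<in> verts S" "t \<in> verts S"
  shows "dist S s t \<le> enat (card ((Ws s - Ws t) \<union> (Ws t - Ws s)))"
  using walkS_exists[OF assms] dist_le_walk by metis

end

lemma symdiff_step:
  assumes "ins1 X Y \<or> ins1 Y X" "finite X" "finite Y" "finite Z"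
  shows "card ((X - Z) \<union> (Z - X)) \<le> Suc (card ((Y - Z) \<union> (Z - Y)))"
proof -
  obtain u where u: "X \<subseteq> insert u Y" "Y \<subseteq> insert u X" using assms(1) by (auto simp: ins1_def)
  have sub: "(X - Z) \<union> (Z - X) \<subseteq> insert u ((Y - Z) \<union> (Z - Y))" using u by auto
  have f: "finite ((Y - Z) \<union> (Z - Y))" using assms by auto
  have "card ((X - Z) \<union> (Z - X)) \<le> card (insert u ((Y - Z) \<union> (Z - Y)))"
    by (rule card_mono) (use f sub in auto)
  also have "\<dots> \<le> Suc (card ((Y - Z) \<union> (Z - Y)))" using f by (simp add: card_insert_if)
  finally show ?thesis .
qed

context setting
begin

abbreviation "H \<equiv> cart_prod C (\<lambda>\<phi>. star_factor \<phi> v)"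
abbreviation "vbar \<equiv> (\<lambda>\<phi>\<in>C. v)"
definition W :: "('a set set \<Rightarrow> 'a) \<Rightarrow> 'a set" where
  "W a = {a \<phi> | \<phi>. \<phi> \<in> C \<and> a \<phi> \<noteq> v}"

lemma v_notin_N: "\<phi> \<in> C \<Longrightarrow> v \<notin> N_phi \<phi> v"
  using C_N adjD by blast

lemma star_adj:
  assumes "\<phi> \<in> C"
  shows "adj (star_factor \<phi> v) a b \<longleftrightarrow> (a = v \<and> b \<in> N_phi \<phi> v) \<or> (b = v \<and> a \<in> N_phi \<phi> v)"
  using v_notin_N[OF assms] unfolding adj_def star_factor_def by (auto simp: doubleton_eq_iff)

lemma vertsH: "verts H = PiE C (\<lambda>\<phi>. insert v (N_phi \<phi> v))"
  by (simp add: cart_prod_def star_factor_def)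

lemma adjH0: "adj H a b \<longleftrightarrow> a \<in> verts H \<and> b \<in> verts H \<and>
   (\<exists>\<phi>\<in>C. ((a \<phi> = v \<and> b \<phi> \<in> N_phi \<phi> v) \<or> (b \<phi> = v \<and> a \<phi> \<in> N_phi \<phi> v)) \<and> (\<forall>\<psi>\<in>C. \<psi> \<noteq> \<phi> \<longrightarrow> a \<psi> = b \<psi>))"
  unfolding cart_prod_adj cart_prod_verts[symmetric] using star_adj by auto

lemma coordN:
  assumes "a \<in> verts H" "\<phi> \<in> C" "a \<phi> \<noteq> v"
  shows "adj G v (a \<phi>) \<and> cls (a \<phi>) = \<phi>"
proof -
  have "a \<phi> \<in> N_phi \<phi> v" using assms by (auto simp: vertsH PiE_iff)
  then show ?thesis using C_N assms(2) by blast
qed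

lemma W_tv: "a \<in> verts H \<Longrightarrow> tv (W a)"
  unfolding tv_def W_def Nv_def using coordN by fastforce

lemma W_inj:
  assumes "a \<in> verts H" "b \<in> verts H" "W a = W b"
  shows "a = b"
proof (rule PiE_ext[of a C "\<lambda>\<phi>. insert v (N_phi \<phi> v)" b])
  show "a \<in> PiE C (\<lambda>\<phi>. insert v (N_phi \<phi> v))" "b \<in> PiE C (\<lambda>\<phi>. insert v (N_phi \<phi> v))"
    using assms by (auto simp: vertsH)
  fix \<phi> assume p: "\<phi> \<in> C"
  have one: "x \<phi> = y \<phi>" if xy: "x \<in> verts H" "y \<in> verts H" "W x = W y" "x \<phi> \<noteq> v" for x y
  proof -
    have "x \<phi> \<in> W y" using xy p by (auto simp: W_def)
    then obtain \<psi> where q: "\<psi> \<in> C" "y \<psi> \<noteq> v" "x \<phi> = y \<psi>" by (auto simp: W_def)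
    have "cls (x \<phi>) = \<phi>" using coordN[OF xy(1) p xy(4)] by blast
    moreover have "cls (y \<psi>) = \<psi>" using coordN[OF xy(2) q(1) q(2)] by blast
    ultimately have "\<psi> = \<phi>" using q by simp
    then show ?thesis using q by simp
  qed
  show "a \<phi> = b \<phi>"
  proof (cases "a \<phi> = v")
    case True
    show ?thesis
    proof (rule ccontr)
      assume "a \<phi> \<noteq> b \<phi>"
      then have "b \<phi> \<noteq> v" using True by simp
      then have "b \<phi> = a \<phi>" using one[of b a] assms by simp
      then show False using \<open>a \<phi> \<noteq> b \<phi>\<close> by simp
    qed
  next
    case False then show ?thesis using one[of a b] assms by simp
  qed
qed

lemma vbar_H: "vbar \<in> verts H" by (simp add: vertsH)
lemma W_vbar: "W vbar = {}" by (auto simp: W_def)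

lemma W_upd_ins:
  assumes "a \<in> verts H" "\<phi> \<in> C" "a \<phi> = v" "adj G v u" "cls u = \<phi>"
  shows "a(\<phi> := u) \<in> verts H" "W (a(\<phi> := u)) = insert u (W a)" "u \<notin> W a"
proof -
  have uN: "u \<in> N_phi \<phi> v" using C_N assms by blast
  show "a(\<phi> := u) \<in> verts H" using assms(1,2) uN by (auto simp: vertsH PiE_iff extensional_def)
  have uv: "u \<noteq> v" using assms(4) adjD by blast
  show "W (a(\<phi> := u)) = insert u (W a)"
  proof
    show "W (a(\<phi> := u)) \<subseteq> insert u (W a)"
    proof
      fix x assume "x \<in> W (a(\<phi> := u))"
      then obtain \<psi> where "\<psi> \<in> C" "(a(\<phi> := u)) \<psi> \<noteq> v" "x = (a(\<phi> := u)) \<psi>" by (auto simp: W_def)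
      then show "x \<in> insert u (W a)" by (cases "\<psi> = \<phi>") (auto simp: W_def)
    qed
    show "insert u (W a) \<subseteq> W (a(\<phi> := u))"
    proof
      fix x assume "x \<in> insert u (W a)"
      then show "x \<in> W (a(\<phi> := u))"
      proof
        assume "x = u"
        then have "x = (a(\<phi> := u)) \<phi> \<and> \<phi> \<in> C \<and> (a(\<phi> := u)) \<phi> \<noteq> v" using assms(2) uv by simp
        then show ?thesis unfolding W_def by blast
      next
        assume "x \<in> W a"
        then obtain \<psi> where q: "\<psi> \<in> C" "a \<psi> \<noteq> v" "x = a \<psi>" by (auto simp: W_def)
        then have "\<psi> \<noteq> \<phi>" using assms(3) by auto
        then have "x = (a(\<phi> := u)) \<psi> \<and> \<psi> \<in> C \<and> (a(\<phi> := u)) \<psi> \<noteq> v" using q by simp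
        then show ?thesis unfolding W_def by blast
      qed
    qed
  qed
  show "u \<notin> W a"
  proof
    assume "u \<in> W a"
    then obtain \<psi> where q: "\<psi> \<in> C" "a \<psi> \<noteq> v" "u = a \<psi>" by (auto simp: W_def)
    then have "cls u = \<psi>" using coordN assms(1) by blast
    then show False using q assms by simp
  qed
qed

lemma W_upd_del:
  assumes "a \<in> verts H" "\<phi> \<in> C"
  shows "a(\<phi> := v) \<in> verts H" "W (a(\<phi> := v)) = W a - {a \<phi>}"
proof -
  show "a(\<phi> := v) \<in> verts H" using assms by (auto simp: vertsH PiE_iff extensional_def)
  have inj: "\<psi> \<in> C \<Longrightarrow> a \<psi> \<noteq> v \<Longrightarrow> a \<psi> = a \<phi> \<Longrightarrow> \<psi> = \<phi>" for \<psi>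
    using coordN assms by metis
  show "W (a(\<phi> := v)) = W a - {a \<phi>}"
  proof
    show "W (a(\<phi> := v)) \<subseteq> W a - {a \<phi>}"
    proof
      fix x assume "x \<in> W (a(\<phi> := v))"
      then obtain \<psi> where q: "\<psi> \<in> C" "(a(\<phi> := v)) \<psi> \<noteq> v" "x = (a(\<phi> := v)) \<psi>" by (auto simp: W_def)
      then have "\<psi> \<noteq> \<phi>" by auto
      then have "x = a \<psi>" "a \<psi> \<noteq> v" using q by auto
      moreover have "a \<psi> \<noteq> a \<phi>" using inj q(1) \<open>\<psi> \<noteq> \<phi>\<close> calculation(2) by blast
      ultimately have "x \<in> W a" "x \<noteq> a \<phi>" using q(1) unfolding W_def by (blast, simp)
      then show "x \<in> W a - {a \<phi>}" by blast
    qed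
    show "W a - {a \<phi>} \<subseteq> W (a(\<phi> := v))"
    proof
      fix x assume "x \<in> W a - {a \<phi>}"
      then obtain \<psi> where q: "\<psi> \<in> C" "a \<psi> \<noteq> v" "x = a \<psi>" "x \<noteq> a \<phi>" by (auto simp: W_def)
      then have "\<psi> \<noteq> \<phi>" by auto
      then have "x = (a(\<phi> := v)) \<psi> \<and> \<psi> \<in> C \<and> (a(\<phi> := v)) \<psi> \<noteq> v" using q by simp
      then show "x \<in> W (a(\<phi> := v))" unfolding W_def by blast
    qed
  qed
qed

lemma W_surj: "tv Z \<Longrightarrow> \<exists>a\<in>verts H. W a = Z"
proof -
  assume t: "tv Z"
  have "finite Z" using tv_fin t .
  then show ?thesis using t
  proof (induction Z rule: finite_induct)
    case empty then show ?case using vbar_H W_vbar by blast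
  next
    case (insert u Z)
    have "tv Z" using insert.prems tv_sub by blast
    then obtain a where a: "a \<in> verts H" "W a = Z" using insert.IH by blast
    have u: "adj G v u" using insert.prems by (auto simp: tv_def Nv_def)
    let ?\<phi> = "cls u"
    have p: "?\<phi> \<in> C" using cls_in_C u .
    have av: "a ?\<phi> = v"
    proof (rule ccontr)
      assume n: "a ?\<phi> \<noteq> v"
      then have "a ?\<phi> \<in> Z" using a p by (auto simp: W_def)
      moreover have "cls (a ?\<phi>) = ?\<phi>" using coordN a p n by blast
      ultimately have "a ?\<phi> = u" using insert.prems unfolding tv_def by blast
      then show False using \<open>a ?\<phi> \<in> Z\<close> insert.hyps by simp
    qed
    show ?case using W_upd_ins[OF a(1) p av u refl] a by blast
  qed
qed

lemma adjH:
  assumes "a \<in> verts H" "b \<in> verts H"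
  shows "adj H a b \<longleftrightarrow> ins1 (W a) (W b) \<or> ins1 (W b) (W a)"
proof
  assume "adj H a b"
  then obtain \<phi> where p: "\<phi> \<in> C" "(a \<phi> = v \<and> b \<phi> \<in> N_phi \<phi> v) \<or> (b \<phi> = v \<and> a \<phi> \<in> N_phi \<phi> v)"
     "\<forall>\<psi>\<in>C. \<psi> \<noteq> \<phi> \<longrightarrow> a \<psi> = b \<psi>" unfolding adjH0 by blast
  have one: "ins1 (W x) (W y)" if xy: "x \<in> verts H" "y \<in> verts H" "x \<phi> = v" "y \<phi> \<in> N_phi \<phi> v"
     "\<forall>\<psi>\<in>C. \<psi> \<noteq> \<phi> \<longrightarrow> x \<psi> = y \<psi>" for x y
  proof -
    have u: "adj G v (y \<phi>)" "cls (y \<phi>) = \<phi>" using C_N p(1) xy(4) by auto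
    have "y = x(\<phi> := y \<phi>)"
    proof (rule PiE_ext[of y C "\<lambda>\<phi>. insert v (N_phi \<phi> v)"])
      show "y \<in> PiE C (\<lambda>\<phi>. insert v (N_phi \<phi> v))" using xy by (simp add: vertsH)
      show "x(\<phi> := y \<phi>) \<in> PiE C (\<lambda>\<phi>. insert v (N_phi \<phi> v))"
        using W_upd_ins(1)[OF xy(1) p(1) xy(3) u] by (simp add: vertsH)
      fix \<psi> assume "\<psi> \<in> C" then show "y \<psi> = (x(\<phi> := y \<phi>)) \<psi>" using xy(5) by auto
    qed
    then have "W y = insert (y \<phi>) (W x)" using W_upd_ins(2)[OF xy(1) p(1) xy(3) u] by metis
    then show ?thesis using W_upd_ins(3)[OF xy(1) p(1) xy(3) u] by (auto simp: ins1_def)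
  qed
  from p(2) show "ins1 (W a) (W b) \<or> ins1 (W b) (W a)"
  proof
    assume "a \<phi> = v \<and> b \<phi> \<in> N_phi \<phi> v" then show ?thesis using one[of a b] assms p(3) by blast
  next
    assume "b \<phi> = v \<and> a \<phi> \<in> N_phi \<phi> v" then show ?thesis using one[of b a] assms p(3) by metis
  qed
next
  have one: "adj H x y" if xy: "x \<in> verts H" "y \<in> verts H" "ins1 (W x) (W y)" for x y
  proof -
    obtain u where u: "u \<notin> W x" "W y = insert u (W x)" using xy(3) by (auto simp: ins1_def)
    then have "u \<in> W y" by simp
    then obtain \<phi> where q: "\<phi> \<in> C" "y \<phi> \<noteq> v" "u = y \<phi>" by (auto simp: W_def)
    have cu: "adj G v u" "cls u = \<phi>" using coordN xy(2) q by auto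
    have xv: "x \<phi> = v"
    proof (rule ccontr)
      assume n: "x \<phi> \<noteq> v"
      then have "x \<phi> \<in> W y" using u q by (auto simp: W_def)
      then obtain \<psi> where r: "\<psi> \<in> C" "y \<psi> \<noteq> v" "x \<phi> = y \<psi>" by (auto simp: W_def)
      have "cls (x \<phi>) = \<phi>" using coordN xy(1) q(1) n by blast
      moreover have "cls (y \<psi>) = \<psi>" using coordN xy(2) r by blast
      ultimately have "\<psi> = \<phi>" using r by simp
      then have "x \<phi> = u" using r q by simp
      then show False using n u(1) q(1) by (auto simp: W_def)
    qed
    have "y = x(\<phi> := u)"
      using W_inj[OF xy(2) W_upd_ins(1)[OF xy(1) q(1) xv cu]] W_upd_ins(2)[OF xy(1) q(1) xv cu] u by simp
    then show ?thesis unfolding adjH0 using xy(1,2) q(1) xv C_N cu by auto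
  qed
  assume "ins1 (W a) (W b) \<or> ins1 (W b) (W a)"
  then show "adj H a b" using one assms adj_sym by metis
qed

lemma W_fin: "a \<in> verts H \<Longrightarrow> finite (W a)" using W_tv tv_fin by blast

lemma adjH_verts: "adj H a b \<Longrightarrow> a \<in> verts H \<and> b \<in> verts H"
  using adjH0 by blast

lemma walkH_bound:
  assumes "walk H p"
  shows "card ((W (hd p) - W (last p)) \<union> (W (last p) - W (hd p))) \<le> length p - 1"
  using assms
proof (induction p rule: induct_list012)
  case 1 then show ?case by (simp add: walk_def)
next
  case (2 x) then show ?case by simp
next
  case (3 x y zs)
  have w: "walk H (y # zs)" and a: "adj H x y" and xv: "x \<in> verts H" using 3(3) by (auto simp: walk_Cons2)
  have yv: "y \<in> verts H" using adjH_verts a by blast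
  have lv: "last (y # zs) \<in> verts H" using w by (auto simp: walk_def)
  have "card ((W x - W (last (y # zs))) \<union> (W (last (y # zs)) - W x))
       \<le> Suc (card ((W y - W (last (y # zs))) \<union> (W (last (y # zs)) - W y)))"
    by (rule symdiff_step) (use a adjH xv yv W_fin lv in auto)
  also have "\<dots> \<le> Suc (length (y # zs) - 1)" using 3(2)[OF w] by simp
  finally show ?case by simp
qed

lemma distH_ge:
  "enat (card ((W a - W b) \<union> (W b - W a))) \<le> dist H a b"
  by (rule dist_ge) (use walkH_bound in fastforce)

end

context setting
begin

definition hv :: "'a set \<Rightarrow> ('a set set \<Rightarrow> 'a)" where
  "hv Z = (SOME a. a \<in> verts H \<and> W a = Z)"

lemma hv: "tv Z \<Longrightarrow> hv Z \<in> verts H \<and> W (hv Z) = Z"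
  unfolding hv_def using W_surj by (metis (mono_tags, lifting) someI_ex)

lemma hv_W: "a \<in> verts H \<Longrightarrow> hv (W a) = a"
  using hv W_tv W_inj by metis

lemma hv_inj: "tv X \<Longrightarrow> tv Y \<Longrightarrow> hv X = hv Y \<longleftrightarrow> X = Y"
  using hv by metis

lemma hv_adj: "tv X \<Longrightarrow> tv Y \<Longrightarrow> adj H (hv X) (hv Y) \<longleftrightarrow> ins1 X Y \<or> ins1 Y X"
  using hv adjH by metis

lemma hv_empty: "hv {} = vbar"
  using hv_W[OF vbar_H] W_vbar by simp

lemma tv_single: "adj G v u \<Longrightarrow> tv {u}" by (simp add: tv_def Nv_def)
lemma tv_pair: "adj G v u \<Longrightarrow> adj G v w \<Longrightarrow> cls u \<noteq> cls w \<Longrightarrow> tv {u, w}"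
  by (auto simp: tv_def Nv_def)

lemma hv_single: "adj G v u \<Longrightarrow> hv {u} = vbar(cls u := u)"
proof -
  assume u: "adj G v u"
  have c: "cls u \<in> C" using cls_in_C u .
  have "vbar (cls u) = v" using c by simp
  note U = W_upd_ins[OF vbar_H c this u refl]
  have e1: "W (vbar(cls u := u)) = {u}" by (simp only: U(2) W_vbar)
  show ?thesis using hv_W[OF U(1)] e1 by metis
qed

lemma hv_pair: "adj G v u \<Longrightarrow> adj G v w \<Longrightarrow> cls u \<noteq> cls w \<Longrightarrow> hv {u, w} = vbar(cls u := u, cls w := w)"
proof -
  assume u: "adj G v u" and w: "adj G v w" and c: "cls u \<noteq> cls w"
  have cu: "cls u \<in> C" "cls w \<in> C" using cls_in_C u w by auto
  have "vbar (cls u) = v" using cu by simp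
  note U = W_upd_ins[OF vbar_H cu(1) this u refl]
  have "(vbar(cls u := u)) (cls w) = v" using cu c by simp
  note U2 = W_upd_ins[OF U(1) cu(2) this w refl]
  have e1: "W (vbar(cls u := u, cls w := w)) = {w, u}" by (simp only: U2(2) U(2) W_vbar)
  show ?thesis using hv_W[OF U2(1)] e1 by (metis insert_commute)
qed

definition gam :: "'a \<Rightarrow> ('a set set \<Rightarrow> 'a)" where "gam s = hv (Ws s)"

lemma gam_H: "s \<in> verts S \<Longrightarrow> gam s \<in> verts H \<and> W (gam s) = Ws s"
  unfolding gam_def using hv Ws_tv by blast

lemma gam_inj: "inj_on gam (verts S)"
  by (rule inj_onI) (metis gam_H Ws_inj)

lemma gam_adj: "s \<in> verts S \<Longrightarrow> t \<in> verts S \<Longrightarrow> adj S s t \<longleftrightarrow> adj H (gam s) (gam t)"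
  using adjS adjH gam_H by metis

lemma gam_v: "gam v = vbar"
  unfolding gam_def using Ws_v hv_empty by simp

lemma gam_N: "adj G v u \<Longrightarrow> gam u = vbar(cls u := u)"
  unfolding gam_def using Ws_N hv_single by simp

lemma gam_dist:
  assumes "s \<in> verts S" "t \<in> verts S"
  shows "dist H (gam s) (gam t) = dist S s t"
proof (rule antisym)
  show "dist H (gam s) (gam t) \<le> dist S s t"
    by (rule dist_hom) (use gam_H gam_adj in auto)
  have "dist S s t \<le> enat (card ((Ws s - Ws t) \<union> (Ws t - Ws s)))" using distS_le assms .
  also have "\<dots> \<le> dist H (gam s) (gam t)" using distH_ge gam_H assms by metis
  finally show "dist S s t \<le> dist H (gam s) (gam t)" .
qed

lemma v_S: "v \<in> verts S" by (simp add: vertsS)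

lemma N2_eq: "N2 H vbar = gam ` verts S"
proof
  show "N2 H vbar \<subseteq> gam ` verts S"
  proof
    fix a assume "a \<in> N2 H vbar"
    then have a: "a \<in> verts H" "dist H vbar a \<le> 2" by (auto simp: N2_def)
    have "enat (card ((W vbar - W a) \<union> (W a - W vbar))) \<le> 2" using distH_ge[of vbar a] a(2) by simp
    then have "card (W a) \<le> 2" using W_vbar by (simp add: numeral_eq_enat)
    then obtain s where s: "s \<in> verts S" "Ws s = W a" using Ws_surj W_tv a(1) by blast
    then have "gam s = a" using gam_H W_inj a(1) by metis
    then show "a \<in> gam ` verts S" using s by blast
  qed
next
  show "gam ` verts S \<subseteq> N2 H vbar"
  proof
    fix a assume "a \<in> gam ` verts S"
    then obtain s where s: "s \<in> verts S" "a = gam s" by blast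
    have "dist H vbar a = dist S v s" using gam_dist[OF v_S s(1)] gam_v s by simp
    also have "\<dots> \<le> enat (card ((Ws v - Ws s) \<union> (Ws s - Ws v)))" using distS_le v_S s(1) .
    also have "\<dots> \<le> 2" using Ws_tv[OF s(1)] Ws_v by (simp add: numeral_eq_enat)
    finally show "a \<in> N2 H vbar" using gam_H s by (auto simp: N2_def)
  qed
qed

lemma part1:
  "graph_iso gam S (induced H (N2 H vbar)) \<and> gam v = vbar \<and>
   (\<forall>\<phi>\<in>C. \<forall>u\<in>N_phi \<phi> v. gam u = vbar(\<phi> := u)) \<and> isometric_emb gam S H"
proof (intro conjI)
  show "graph_iso gam S (induced H (N2 H vbar))"
    unfolding graph_iso_def
  proof
    show "bij_betw gam (verts S) (verts (induced H (N2 H vbar)))"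
      using gam_inj N2_eq by (simp add: induced_def bij_betw_def)
    show "\<forall>x\<in>verts S. \<forall>y\<in>verts S. adj S x y = adj (induced H (N2 H vbar)) (gam x) (gam y)"
    proof (intro ballI)
      fix x y assume xy: "x \<in> verts S" "y \<in> verts S"
      have "gam x \<in> N2 H vbar" "gam y \<in> N2 H vbar" using N2_eq xy by auto
      then have "adj (induced H (N2 H vbar)) (gam x) (gam y) \<longleftrightarrow> adj H (gam x) (gam y)"
        by (auto simp: adj_def induced_def)
      then show "adj S x y = adj (induced H (N2 H vbar)) (gam x) (gam y)" using gam_adj xy by simp
    qed
  qed
  show "gam v = vbar" by (rule gam_v)
  show "\<forall>\<phi>\<in>C. \<forall>u\<in>N_phi \<phi> v. gam u = vbar(\<phi> := u)"
    using C_N gam_N by auto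
  show "isometric_emb gam S H"
    unfolding isometric_emb_def using gam_inj gam_H gam_dist by auto
qed

end

lemma chordless_sym_gen: "chordless_sq X a u x w \<longleftrightarrow> chordless_sq X a w x u"
  unfolding chordless_sq_def by (auto simp: adj_sym)

lemma sq_tops_sym: "sq_tops X a u w = sq_tops X a w u"
  unfolding sq_tops_def by (auto simp: adj_sym)

lemma opposite_sym: "opposite X e f \<Longrightarrow> opposite X f e"
  unfolding opposite_def by blast

lemma delta_sym: "(e, f) \<in> delta X \<Longrightarrow> (f, e) \<in> delta X"
proof -
  assume d: "(e, f) \<in> delta X"
  then have ef: "e \<in> edges X" "f \<in> edges X" by (auto simp: delta_def)
  from d consider (a) "e \<noteq> f \<and> (\<exists>v u w. e = {v, u} \<and> f = {v, w} \<and> adj X v u \<and> adj X v w \<and>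
          \<not> (card (sq_tops X v u w) = 1 \<and> (\<forall>x\<in>sq_tops X v u w. chordless_sq X v u x w)))"
    | (b) "opposite X e f" | (c) "e = f"
    unfolding delta_def by blast
  then show "(f, e) \<in> delta X"
  proof cases
    case a
    then obtain a u w where h: "e \<noteq> f" "e = {a, u}" "f = {a, w}" "adj X a u" "adj X a w"
      "\<not> (card (sq_tops X a u w) = 1 \<and> (\<forall>x\<in>sq_tops X a u w. chordless_sq X a u x w))" by blast
    have "\<not> (card (sq_tops X a w u) = 1 \<and> (\<forall>x\<in>sq_tops X a w u. chordless_sq X a w x u))"
      using h(6) sq_tops_sym[of X a u w] chordless_sym_gen[of X a u _ w] by simp
    then show ?thesis using h ef unfolding delta_def by blast
  next
    case b then show ?thesis using ef opposite_sym unfolding delta_def by blast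
  next
    case c then show ?thesis using d by simp
  qed
qed

lemma delta_refl: "e \<in> edges X \<Longrightarrow> (e, e) \<in> delta X"
  by (simp add: delta_def)

context setting
begin

definition base :: "'a \<Rightarrow> ('a set set \<Rightarrow> 'a) set" where "base u = {hv {}, hv {u}}"

lemma adj_edge: "adj X a b \<Longrightarrow> {a, b} \<in> edges X" by (simp add: adj_def)

lemma ins1_single_empty: "ins1 {} {u}" by (simp add: ins1_def)

lemma HD1:
  assumes p: "adj G v p" and q: "adj G v q" and c: "cls p = cls q"
  shows "(base p, base q) \<in> delta H"
proof (cases "p = q")
  case True
  have "adj H (hv {}) (hv {p})" using hv_adj tv_single p ins1_single_empty by (metis tv_sub empty_subsetI)
  then show ?thesis using True by (simp add: base_def delta_refl adj_edge)
next
  case False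
  have t0: "tv {}" by (simp add: tv_def)
  have tp: "tv {p}" and tq: "tv {q}" using tv_single p q by auto
  have a1: "adj H (hv {}) (hv {p})" "adj H (hv {}) (hv {q})"
    using hv_adj[OF t0 tp] hv_adj[OF t0 tq] ins1_single_empty[of p] ins1_single_empty[of q] by blast+
  have ne: "base p \<noteq> base q"
  proof
    assume "base p = base q"
    then have "hv {p} = hv {q} \<or> hv {p} = hv {}" by (auto simp: base_def doubleton_eq_iff)
    then show False using hv_inj[OF tp tq] hv_inj[OF tp t0] False by auto
  qed
  have empty: "sq_tops H (hv {}) (hv {p}) (hv {q}) = {}"
  proof (rule ccontr)
    assume "sq_tops H (hv {}) (hv {p}) (hv {q}) \<noteq> {}"
    then obtain z where z: "z \<noteq> hv {}" "adj H (hv {p}) z" "adj H z (hv {q})"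
      by (auto simp: sq_tops_def)
    have zH: "z \<in> verts H" using adjH_verts z(2) by blast
    have tz: "tv (W z)" using W_tv zH .
    have zz: "z = hv (W z)" using hv_W zH by simp
    have i1: "ins1 {p} (W z) \<or> ins1 (W z) {p}" using hv_adj[OF tp tz] z(2) zz by metis
    have i2: "ins1 {q} (W z) \<or> ins1 (W z) {q}" using hv_adj[OF tq tz] z(3) zz adj_sym by metis
    have nz: "W z \<noteq> {}" using z(1) zz by auto
    have "p \<in> W z"
      using i1 nz by (auto simp: ins1_def)
    moreover have "q \<in> W z"
      using i2 nz by (auto simp: ins1_def)
    ultimately show False using tz c False by (auto simp: tv_def)
  qed
  have e1: "{hv {}, hv {p}} \<in> edges H" "{hv {}, hv {q}} \<in> edges H"
    using adj_edge[OF a1(1)] adj_edge[OF a1(2)] by auto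
  have ne': "{hv {}, hv {p}} \<noteq> {hv {}, hv {q}}" using ne by (simp add: base_def)
  have nc: "\<not> (card (sq_tops H (hv {}) (hv {p}) (hv {q})) = 1 \<and>
      (\<forall>x\<in>sq_tops H (hv {}) (hv {p}) (hv {q}). chordless_sq H (hv {}) (hv {p}) x (hv {q})))"
    using empty by simp
  have "({hv {}, hv {p}}, {hv {}, hv {q}}) \<in> delta H"
    unfolding delta_def using e1 ne' a1 nc by blast
  then show ?thesis by (simp add: base_def)
qed

lemma HD2:
  assumes u: "adj G v u" and a: "adj G v a" and c: "cls a \<noteq> cls u"
  shows "({hv {a}, hv {a, u}}, base u) \<in> delta H"
proof -
  have t0: "tv {}" by (simp add: tv_def)
  have tu: "tv {u}" and ta: "tv {a}" using tv_single u a by auto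
  have tau: "tv {a, u}" using tv_pair a u c by blast
  have au: "a \<noteq> u" using c by auto
  have adj1: "adj H (hv {}) (hv {u})" using hv_adj[OF t0 tu] by (simp add: ins1_def)
  have adj2: "adj H (hv {u}) (hv {a, u})" using hv_adj[OF tu tau] ins1_pair[OF au] by auto
  have adj3: "adj H (hv {a, u}) (hv {a})" using hv_adj[OF tau ta] ins1_pair[OF au] by auto
  have adj4: "adj H (hv {a}) (hv {})" using hv_adj[OF ta t0] by (simp add: ins1_def)
  have n1: "\<not> adj H (hv {u}) (hv {a})" using hv_adj[OF tu ta] au
    by (auto simp: ins1_def)
  have n2: "\<not> adj H (hv {}) (hv {a, u})" using hv_adj[OF t0 tau] au
    by (auto simp: ins1_def doubleton_eq_iff)
  have d: "distinct [hv {}, hv {u}, hv {a, u}, hv {a}]"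
    using hv_inj[OF t0 tu] hv_inj[OF t0 tau] hv_inj[OF t0 ta] hv_inj[OF tu tau] hv_inj[OF tu ta]
      hv_inj[OF tau ta] au by (auto simp: doubleton_eq_iff)
  have "chordless_sq H (hv {}) (hv {u}) (hv {a, u}) (hv {a})"
    unfolding chordless_sq_def using adj1 adj2 adj3 adj4 n1 n2 d by blast
  then have "opposite H {hv {a, u}, hv {a}} {hv {}, hv {u}}"
    unfolding opposite_def by blast
  moreover have "{hv {a, u}, hv {a}} \<in> edges H" "{hv {}, hv {u}} \<in> edges H"
    using adj_edge[OF adj3] adj_edge[OF adj1] by auto
  ultimately have "({hv {a, u}, hv {a}}, {hv {}, hv {u}}) \<in> delta H"
    unfolding delta_def by blast
  then show ?thesis by (simp add: base_def insert_commute)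
qed

lemma edgeS_desc:
  assumes "e \<in> edges S"
  shows "\<exists>u. adj G v u \<and> (e, {v, u}) \<in> R \<and> (gam ` e, base u) \<in> delta H"
  using assms unfolding edgesS
proof
  assume "e \<in> {{v, u} |u. adj G v u}"
  then obtain u where u: "e = {v, u}" "adj G v u" by blast
  have "(e, {v, u}) \<in> R" using u R_refl adjD by blast
  moreover have "gam ` e = base u" using u gam_def Ws_v Ws_N by (simp add: base_def)
  moreover have "(base u, base u) \<in> delta H" using HD1 u(2) by blast
  ultimately show ?thesis using u(2) by metis
next
  assume "e \<in> {f. \<exists>u x w. Pq u x w \<and> (f = {u, x} \<or> f = {x, w})}"
  then obtain u x w where p: "Pq u x w" "e = {u, x} \<or> e = {x, w}" by blast
  have one: "\<exists>u. adj G v u \<and> ({a, x}, {v, u}) \<in> R \<and> (gam ` {a, x}, base u) \<in> delta H"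
    if pp: "Pq a x b" for a b
  proof -
    note d = PqD[OF pp]
    have "({v, b}, {x, a}) \<in> R" using K2(2) pp by (simp add: Pq_def)
    then have r: "({a, x}, {v, b}) \<in> R" using R_sym by (simp add: insert_commute)
    have g: "gam ` {a, x} = {hv {a}, hv {a, b}}"
      using Ws_T[OF pp] Ws_N d by (simp add: gam_def)
    have "({hv {a}, hv {a, b}}, base b) \<in> delta H" using HD2 d by blast
    then show ?thesis using r g d by metis
  qed
  from p(2) show ?thesis
  proof
    assume "e = {u, x}" then show ?thesis using one[OF p(1)] by simp
  next
    assume "e = {x, w}" then show ?thesis using one[of w u] p(1) Pq_sym by (simp add: insert_commute)
  qed
qed

lemma part2a:
  "{(gam ` e, gam ` f) | e f. (e, f) \<in> d_restr G v} \<subseteq> (delta H)\<^sup>+"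
proof
  fix z assume "z \<in> {(gam ` e, gam ` f) | e f. (e, f) \<in> d_restr G v}"
  then obtain e f where z: "z = (gam ` e, gam ` f)" "(e, f) \<in> R" "e \<in> edges S" "f \<in> edges S"
    by (auto simp: d_restr_def)
  obtain u where u: "adj G v u" "(e, {v, u}) \<in> R" "(gam ` e, base u) \<in> delta H"
    using edgeS_desc z(3) by blast
  obtain w where w: "adj G v w" "(f, {v, w}) \<in> R" "(gam ` f, base w) \<in> delta H"
    using edgeS_desc z(4) by blast
  have "({v, u}, {v, w}) \<in> R" using u(2) w(2) z(2) R_sym R_trans by blast
  then have "cls u = cls w" using cls_eq_iff u(1) w(1) by blast
  then have "(base u, base w) \<in> delta H" using HD1 u(1) w(1) by blast
  then have "(gam ` e, gam ` f) \<in> (delta H)\<^sup>+"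
    using u(3) delta_sym[OF w(3)] by (meson trancl.r_into_trancl trancl_trans)
  then show "z \<in> (delta H)\<^sup>+" using z(1) by simp
qed

end

locale piso =
  fixes Hg :: "'c graph" and I :: "nat set" and Gs :: "nat \<Rightarrow> 'c graph" and \<psi> :: "'c \<Rightarrow> nat \<Rightarrow> 'c"
  assumes iso: "graph_iso \<psi> Hg (cart_prod I Gs)"
    and hadj: "adj Hg a b \<Longrightarrow> a \<in> verts Hg \<and> b \<in> verts Hg"
    and hedge: "e \<in> edges Hg \<Longrightarrow> \<exists>a b. adj Hg a b \<and> e = {a, b}"
begin

abbreviation "P \<equiv> cart_prod I Gs"

lemma psi_bij: "bij_betw \<psi> (verts Hg) (PiE I (\<lambda>i. verts (Gs i)))"
  using iso by (simp add: graph_iso_def cart_prod_verts)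

lemma psi_P: "a \<in> verts Hg \<Longrightarrow> \<psi> a \<in> PiE I (\<lambda>i. verts (Gs i))"
  using psi_bij bij_betwE by blast

lemma psi_inj: "a \<in> verts Hg \<Longrightarrow> b \<in> verts Hg \<Longrightarrow> \<psi> a = \<psi> b \<Longrightarrow> a = b"
  using psi_bij by (metis bij_betw_def inj_onD)

lemma psi_adj: "a \<in> verts Hg \<Longrightarrow> b \<in> verts Hg \<Longrightarrow> adj Hg a b \<longleftrightarrow> adj P (\<psi> a) (\<psi> b)"
  using iso by (simp add: graph_iso_def)

lemma psi_surj: "Y \<in> PiE I (\<lambda>i. verts (Gs i)) \<Longrightarrow> \<exists>y\<in>verts Hg. \<psi> y = Y"
  using psi_bij by (metis bij_betw_def imageE)

definition co :: "'c \<Rightarrow> 'c \<Rightarrow> nat" where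
  "co a b = (THE i. i \<in> I \<and> \<psi> a i \<noteq> \<psi> b i)"

lemma adjP_coord:
  assumes "adj P X Y"
  shows "\<exists>i\<in>I. adj (Gs i) (X i) (Y i) \<and> (\<forall>j. j \<noteq> i \<longrightarrow> X j = Y j)"
proof -
  from assms obtain i where i: "i \<in> I" "adj (Gs i) (X i) (Y i)" "\<forall>j\<in>I. j \<noteq> i \<longrightarrow> X j = Y j"
    and XY: "X \<in> PiE I (\<lambda>i. verts (Gs i))" "Y \<in> PiE I (\<lambda>i. verts (Gs i))"
    unfolding cart_prod_adj by blast
  have "\<forall>j. j \<noteq> i \<longrightarrow> X j = Y j"
  proof (intro allI impI)
    fix j assume "j \<noteq> i"
    show "X j = Y j"
    proof (cases "j \<in> I")
      case True then show ?thesis using i(3) \<open>j \<noteq> i\<close> by blast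
    next
      case False then show ?thesis using XY by (simp add: PiE_def extensional_def)
    qed
  qed
  then show ?thesis using i by blast
qed

lemma co_prop:
  assumes "adj Hg a b"
  shows "co a b \<in> I" "\<psi> a (co a b) \<noteq> \<psi> b (co a b)" "\<And>j. j \<noteq> co a b \<Longrightarrow> \<psi> a j = \<psi> b j"
    "adj (Gs (co a b)) (\<psi> a (co a b)) (\<psi> b (co a b))"
proof -
  have ab: "a \<in> verts Hg" "b \<in> verts Hg" using hadj assms by auto
  have "adj P (\<psi> a) (\<psi> b)" using psi_adj ab assms by simp
  from adjP_coord[OF this] obtain i where i: "i \<in> I" "adj (Gs i) (\<psi> a i) (\<psi> b i)" "\<forall>j. j \<noteq> i \<longrightarrow> \<psi> a j = \<psi> b j"
    by blast
  have ne: "\<psi> a i \<noteq> \<psi> b i" using i(2) by (auto simp: adj_def)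
  have "co a b = i" unfolding co_def
    by (rule the_equality) (use i ne in auto)
  then show "co a b \<in> I" "\<psi> a (co a b) \<noteq> \<psi> b (co a b)" "\<And>j. j \<noteq> co a b \<Longrightarrow> \<psi> a j = \<psi> b j"
    "adj (Gs (co a b)) (\<psi> a (co a b)) (\<psi> b (co a b))" using i ne by auto
qed

lemma co_sym: "adj Hg a b \<Longrightarrow> co a b = co b a"
  using co_prop adj_sym by metis

lemma edge_coord:
  assumes "adj Hg a b" "i \<in> I"
  shows "(\<exists>a' b'. {a, b} = {a', b'} \<and> \<psi> a' i \<noteq> \<psi> b' i) \<longleftrightarrow> i = co a b"
proof
  assume "\<exists>a' b'. {a, b} = {a', b'} \<and> \<psi> a' i \<noteq> \<psi> b' i"
  then obtain a' b' where "{a, b} = {a', b'}" "\<psi> a' i \<noteq> \<psi> b' i" by blast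
  then have "\<psi> a i \<noteq> \<psi> b i" by (auto simp: doubleton_eq_iff)
  then show "i = co a b" using co_prop(3)[OF assms(1)] by metis
next
  assume "i = co a b"
  then show "\<exists>a' b'. {a, b} = {a', b'} \<and> \<psi> a' i \<noteq> \<psi> b' i" using co_prop(2)[OF assms(1)] by blast
qed

lemma coord_rel_iff:
  assumes "adj Hg a b" "adj Hg c d"
  shows "({a, b}, {c, d}) \<in> coord_rel Hg I \<psi> \<longleftrightarrow> co a b = co c d"
proof -
  have "{a, b} \<in> edges Hg" "{c, d} \<in> edges Hg" using assms by (auto simp: adj_def)
  then show ?thesis unfolding coord_rel_def using edge_coord[OF assms(1)] edge_coord[OF assms(2)]
    co_prop(1)[OF assms(1)] by auto
qed

lemma coord_rel_trans: "trans (coord_rel Hg I \<psi>)"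
proof (rule transI)
  fix e f g assume ef: "(e, f) \<in> coord_rel Hg I \<psi>" and fg: "(f, g) \<in> coord_rel Hg I \<psi>"
  have E: "e \<in> edges Hg" "f \<in> edges Hg" "g \<in> edges Hg" using ef fg by (auto simp: coord_rel_def)
  obtain a b where ab: "adj Hg a b" "e = {a, b}" using hedge E(1) by blast
  obtain c d where cd: "adj Hg c d" "f = {c, d}" using hedge E(2) by blast
  obtain x y where xy: "adj Hg x y" "g = {x, y}" using hedge E(3) by blast
  show "(e, g) \<in> coord_rel Hg I \<psi>"
    using ef fg coord_rel_iff ab cd xy by metis
qed

lemma four_cycle:
  assumes "adj Hg a b" "adj Hg b c" "adj Hg c d" "adj Hg d a" "a \<noteq> c" "b \<noteq> d"
  shows "co a b = co c d"
proof (rule ccontr)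
  assume ne: "co a b \<noteq> co c d"
  define k1 k2 k3 k4 where "k1 = co a b" "k2 = co b c" "k3 = co c d" "k4 = co d a"
  note p1 = co_prop[OF assms(1), folded k1_k2_k3_k4_def(1)]
  note p2 = co_prop[OF assms(2), folded k1_k2_k3_k4_def(2)]
  note p3 = co_prop[OF assms(3), folded k1_k2_k3_k4_def(3)]
  note p4 = co_prop[OF assms(4), folded k1_k2_k3_k4_def(4)]
  have ne': "k1 \<noteq> k3" using ne k1_k2_k3_k4_def by simp
  have V: "a \<in> verts Hg" "b \<in> verts Hg" "c \<in> verts Hg" "d \<in> verts Hg" using hadj assms by auto
  have c1: "k2 = k1 \<or> k4 = k1"
  proof (rule ccontr)
    assume "\<not> (k2 = k1 \<or> k4 = k1)"
    then have "\<psi> b k1 = \<psi> c k1" "\<psi> c k1 = \<psi> d k1" "\<psi> d k1 = \<psi> a k1" using p2(3) p3(3) p4(3) ne' by metis+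
    then show False using p1(2) by simp
  qed
  have c3: "k2 = k3 \<or> k4 = k3"
  proof (rule ccontr)
    assume "\<not> (k2 = k3 \<or> k4 = k3)"
    then have "\<psi> d k3 = \<psi> a k3" "\<psi> a k3 = \<psi> b k3" "\<psi> b k3 = \<psi> c k3" using p4(3) p1(3) p2(3) ne' by metis+
    then show False using p3(2) by simp
  qed
  show False
  proof (cases "k2 = k1")
    case True
    then have "k4 = k3" using c3 ne' by simp
    have "\<psi> a = \<psi> c"
    proof
      fix j show "\<psi> a j = \<psi> c j"
      proof (cases "j = k1")
        case False then show ?thesis using p1(3) p2(3) True by metis
      next
        case True then show ?thesis using p3(3) p4(3) \<open>k4 = k3\<close> ne' by metis
      qed
    qed
    then show False using psi_inj V assms(5) by blast
  next
    case False
    then have "k4 = k1" using c1 by simp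
    then have "k2 = k3" using c3 ne' by auto
    have "\<psi> b = \<psi> d"
    proof
      fix j show "\<psi> b j = \<psi> d j"
      proof (cases "j = k1")
        case False then show ?thesis using p1(3) p4(3) \<open>k4 = k1\<close> by metis
      next
        case True then show ?thesis using p2(3) p3(3) \<open>k2 = k3\<close> ne' by metis
      qed
    qed
    then show False using psi_inj V assms(6) by blast
  qed
qed

lemma adj_pair_square:
  assumes xu: "adj Hg x u" and xw: "adj Hg x w" and uw: "u \<noteq> w" and ne: "co x u \<noteq> co x w"
  shows "card (sq_tops Hg x u w) = 1 \<and> (\<forall>y\<in>sq_tops Hg x u w. chordless_sq Hg x u y w)"
proof -
  define i j where "i = co x u" "j = co x w"
  note pu = co_prop[OF xu, folded i_j_def(1)]
  note pw = co_prop[OF xw, folded i_j_def(2)]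
  have ij: "i \<noteq> j" using ne i_j_def by simp
  have V: "x \<in> verts Hg" "u \<in> verts Hg" "w \<in> verts Hg" using hadj xu xw by auto
  define X U Wv where "X = \<psi> x" "U = \<psi> u" "Wv = \<psi> w"
  define Y where "Y = X(i := U i, j := Wv j)"
  have XP: "X \<in> PiE I (\<lambda>i. verts (Gs i))" "U \<in> PiE I (\<lambda>i. verts (Gs i))" "Wv \<in> PiE I (\<lambda>i. verts (Gs i))"
    using psi_P V X_U_Wv_def by auto
  have YP: "Y \<in> PiE I (\<lambda>i. verts (Gs i))"
    using XP pu(1) pw(1) unfolding Y_def by (auto simp: PiE_iff extensional_def)
  obtain y where y: "y \<in> verts Hg" "\<psi> y = Y" using psi_surj YP by blast
  have Uj: "U j = X j" using pu(3) ij X_U_Wv_def by metis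
  have Wi: "Wv i = X i" using pw(3) ij X_U_Wv_def by metis
  have Ui: "U i \<noteq> X i" and Wj: "Wv j \<noteq> X j" using pu(2) pw(2) X_U_Wv_def by auto
  have UY: "\<And>t. t \<noteq> j \<Longrightarrow> U t = Y t" using pu(3) X_U_Wv_def unfolding Y_def by auto
  have WY: "\<And>t. t \<noteq> i \<Longrightarrow> Wv t = Y t" using pw(3) X_U_Wv_def unfolding Y_def by auto
  have Yi: "Y i = U i" and Yj: "Y j = Wv j" using ij unfolding Y_def by auto
  have "adj (Gs j) (U j) (Y j)" using pw(4) Uj Yj X_U_Wv_def by simp
  moreover have "\<forall>t\<in>I. t \<noteq> j \<longrightarrow> U t = Y t" using UY by blast
  ultimately have "adj P U Y" unfolding cart_prod_adj using XP(2) YP pw(1) by blast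
  then have uy: "adj Hg u y" using psi_adj V y X_U_Wv_def by simp
  have "adj (Gs i) (Y i) (Wv i)" using pu(4) Wi Yi X_U_Wv_def adj_sym by metis
  moreover have "\<forall>t\<in>I. t \<noteq> i \<longrightarrow> Y t = Wv t" using WY by metis
  ultimately have "adj P Y Wv" unfolding cart_prod_adj using XP(3) YP pu(1) by blast
  then have yw: "adj Hg y w" using psi_adj V y X_U_Wv_def by simp
  have yx: "y \<noteq> x" using y Yi Ui X_U_Wv_def by auto
  have yu: "y \<noteq> u" using y Yj Wj Uj X_U_Wv_def by auto
  have yw': "y \<noteq> w" using y Yi Wi Ui X_U_Wv_def by auto
  have ysq: "y \<in> sq_tops Hg x u w" using uy yw yx yu yw' by (auto simp: sq_tops_def)
  have uniq: "z = y" if z: "z \<in> sq_tops Hg x u w" for z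
  proof -
    have zz: "z \<noteq> x" "adj Hg u z" "adj Hg z w" using z by (auto simp: sq_tops_def)
    have zV: "z \<in> verts Hg" using hadj zz(2) by blast
    define k l where "k = co u z" "l = co z w"
    note pk = co_prop[OF zz(2), folded k_l_def(1)]
    note pl = co_prop[OF zz(3), folded k_l_def(2)]
    define Z where "Z = \<psi> z"
    have ZU: "\<And>t. t \<noteq> k \<Longrightarrow> Z t = U t" using pk(3) Z_def X_U_Wv_def by metis
    have ZW: "\<And>t. t \<noteq> l \<Longrightarrow> Z t = Wv t" using pl(3) Z_def X_U_Wv_def by metis
    have XU: "\<And>t. t \<noteq> i \<Longrightarrow> X t = U t" using pu(3) X_U_Wv_def by metis
    have XW: "\<And>t. t \<noteq> j \<Longrightarrow> X t = Wv t" using pw(3) X_U_Wv_def by metis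
    show "z = y"
    proof (cases "k = j")
      case True
      have "l = i"
      proof (rule ccontr)
        assume "l \<noteq> i"
        then have "Z i = Wv i" using ZW by metis
        moreover have "Z i = U i" using ZU True ij by metis
        ultimately show False using Wi Ui by simp
      qed
      have "Z = Y"
      proof
        fix t show "Z t = Y t"
        proof (cases "t = i")
          case True then show ?thesis using ZU \<open>k = j\<close> ij Yi by metis
        next
          case False then show ?thesis using ZW \<open>l = i\<close> WY by metis
        qed
      qed
      then show ?thesis using psi_inj zV y Z_def by metis
    next
      case False
      then have Zj: "Z j = X j" using ZU Uj by metis
      have "l = j"
      proof (rule ccontr)
        assume "l \<noteq> j" then have "Z j = Wv j" using ZW by metis
        then show False using Zj Wj by simp
      qed
      then have Zi: "Z i = X i" using ZW Wi ij by metis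
      have "k = i"
      proof (rule ccontr)
        assume "k \<noteq> i" then have "Z i = U i" using ZU by metis
        then show False using Zi Ui by simp
      qed
      have "Z = X"
      proof
        fix t show "Z t = X t"
        proof (cases "t = i")
          case True then show ?thesis using Zi by simp
        next
          case False then show ?thesis using ZU \<open>k = i\<close> XU by metis
        qed
      qed
      then have "z = x" using psi_inj zV V Z_def X_U_Wv_def by metis
      then show ?thesis using zz(1) by simp
    qed
  qed
  have sq: "sq_tops Hg x u w = {y}" using ysq uniq by blast
  have nuw: "\<not> adj Hg u w"
  proof
    assume "adj Hg u w"
    then obtain t where t: "\<forall>s. s \<noteq> t \<longrightarrow> U s = Wv s" using co_prop(3) X_U_Wv_def by metis
    have "U i = Wv i \<or> U j = Wv j" using t ij by metis
    then show False using Ui Wi Uj Wj by auto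
  qed
  have nxy: "\<not> adj Hg x y"
  proof
    assume "adj Hg x y"
    then obtain t where t: "\<forall>s. s \<noteq> t \<longrightarrow> X s = Y s" using co_prop(3) X_U_Wv_def y by metis
    have "X i = Y i \<or> X j = Y j" using t ij by metis
    then show False using Yi Yj Ui Wj by auto
  qed
  have xu': "x \<noteq> u" "x \<noteq> w" using xu xw by (auto simp: adj_def)
  have "chordless_sq Hg x u y w"
    unfolding chordless_sq_def using xu uy yw xw adj_sym[of Hg w x] nuw nxy xu' uw yx yu yw' by auto
  then show ?thesis using sq by simp
qed

lemma delta_coord: "delta Hg \<subseteq> coord_rel Hg I \<psi>"
proof
  fix z assume "z \<in> delta Hg"
  then obtain e f where z: "z = (e, f)" "(e, f) \<in> delta Hg" by (cases z) auto
  have E: "e \<in> edges Hg" "f \<in> edges Hg" using z(2) by (auto simp: delta_def)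
  from z(2) consider (a) "e \<noteq> f \<and> (\<exists>v u w. e = {v, u} \<and> f = {v, w} \<and> adj Hg v u \<and> adj Hg v w \<and>
          \<not> (card (sq_tops Hg v u w) = 1 \<and> (\<forall>x\<in>sq_tops Hg v u w. chordless_sq Hg v u x w)))"
    | (b) "opposite Hg e f" | (c) "e = f"
    unfolding delta_def by blast
  then show "z \<in> coord_rel Hg I \<psi>"
  proof cases
    case a
    then obtain x u w where h: "e \<noteq> f" "e = {x, u}" "f = {x, w}" "adj Hg x u" "adj Hg x w"
      "\<not> (card (sq_tops Hg x u w) = 1 \<and> (\<forall>y\<in>sq_tops Hg x u w. chordless_sq Hg x u y w))" by blast
    have "u \<noteq> w" using h by auto
    then have "co x u = co x w" using adj_pair_square h by blast
    then show ?thesis using coord_rel_iff h z by simp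
  next
    case b
    then obtain a u x w where s: "chordless_sq Hg a u x w" and
      o: "(e = {a, u} \<and> f = {x, w}) \<or> (e = {x, w} \<and> f = {a, u}) \<or>
      (e = {a, w} \<and> f = {x, u}) \<or> (e = {x, u} \<and> f = {a, w})"
      unfolding opposite_def by blast
    have A: "adj Hg a u" "adj Hg u x" "adj Hg x w" "adj Hg w a" and D: "a \<noteq> x" "u \<noteq> w"
      using s by (auto simp: chordless_sq_def)
    have A': "adj Hg u a" "adj Hg x u" "adj Hg w x" "adj Hg a w" using A adj_sym by metis+
    have c1: "co a u = co x w" using four_cycle[OF A D] .
    have c2: "co a w = co x u" using four_cycle[OF A'(4) A'(3) A'(2) A'(1)] D by metis
    from o show ?thesis
    proof (elim disjE conjE)
      assume "e = {a, u}" "f = {x, w}" then show ?thesis using coord_rel_iff A c1 z by simp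
    next
      assume "e = {x, w}" "f = {a, u}" then show ?thesis using coord_rel_iff A c1 z by simp
    next
      assume "e = {a, w}" "f = {x, u}" then show ?thesis using coord_rel_iff A' c2 z by simp
    next
      assume "e = {x, u}" "f = {a, w}" then show ?thesis using coord_rel_iff A' c2 z by simp
    qed
  next
    case c
    obtain a b where "adj Hg a b" "e = {a, b}" using hedge E(1) by blast
    then show ?thesis using coord_rel_iff c z by simp
  qed
qed

lemma trancl_delta_coord: "(delta Hg)\<^sup>+ \<subseteq> coord_rel Hg I \<psi>"
proof
  fix z assume "z \<in> (delta Hg)\<^sup>+"
  then have "z \<in> (coord_rel Hg I \<psi>)\<^sup>+" using trancl_mono delta_coord by blast
  then show "z \<in> coord_rel Hg I \<psi>" using trancl_id[OF coord_rel_trans] by simp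
qed

end

lemma single_prod_adj:
  "adj (cart_prod {c} F) f g \<longleftrightarrow> f \<in> PiE {c} (\<lambda>i. verts (F i)) \<and> g \<in> PiE {c} (\<lambda>i. verts (F i)) \<and>
     adj (F c) (f c) (g c)"
  unfolding cart_prod_adj by auto

lemma bex_reindex:
  "(\<And>n. n \<in> I \<Longrightarrow> en n \<in> C) \<Longrightarrow> (\<And>\<phi>. \<phi> \<in> C \<Longrightarrow> \<exists>n\<in>I. en n = \<phi>) \<Longrightarrow>
   (\<exists>\<phi>\<in>C. P \<phi>) \<longleftrightarrow> (\<exists>n\<in>I. P (en n))"
  by blast

lemma other_elem:
  assumes "finite A" "card A \<ge> 2" "c \<in> A"
  shows "\<exists>q\<in>A. q \<noteq> c"
proof (rule ccontr)
  assume "\<not> (\<exists>q\<in>A. q \<noteq> c)"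
  then have "A \<subseteq> {c}" by blast
  then have "card A \<le> 1" using card_mono[of "{c}" A] by simp
  then show False using assms(2) by simp
qed

lemma reindex_iso:
  assumes en: "bij_betw en I C"
  shows "graph_iso (\<lambda>h. \<lambda>n\<in>I. restrict h {en n}) (cart_prod C F) (cart_prod I (\<lambda>n. cart_prod {en n} F))"
proof -
  let ?p = "\<lambda>h. \<lambda>n\<in>I. restrict h {en n}"
  let ?V = "PiE C (\<lambda>i. verts (F i))"
  let ?V' = "PiE I (\<lambda>n. PiE {en n} (\<lambda>i. verts (F i)))"
  have enI: "n \<in> I \<Longrightarrow> en n \<in> C" for n using en bij_betwE by blast
  have enC: "\<phi> \<in> C \<Longrightarrow> \<exists>n\<in>I. en n = \<phi>" for \<phi> using en by (metis bij_betw_def imageE)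
  have eninj: "n \<in> I \<Longrightarrow> m \<in> I \<Longrightarrow> en n = en m \<Longrightarrow> n = m" for n m
    using en by (metis bij_betw_def inj_onD)
  have map: "?p h \<in> ?V'" if "h \<in> ?V" for h using that enI by (auto simp: PiE_iff)
  have inj: "inj_on ?p ?V"
  proof (rule inj_onI)
    fix h h' assume h: "h \<in> ?V" "h' \<in> ?V" "?p h = ?p h'"
    show "h = h'"
    proof (rule PiE_ext[OF h(1) h(2)])
      fix \<phi> assume "\<phi> \<in> C"
      then obtain n where n: "n \<in> I" "en n = \<phi>" using enC by blast
      have "?p h n = ?p h' n" using h(3) by simp
      then have "restrict h {en n} (en n) = restrict h' {en n} (en n)" using n(1) by simp
      then show "h \<phi> = h' \<phi>" using n by simp
    qed
  qed
  have surj: "?V' \<subseteq> ?p ` ?V"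
  proof
    fix g assume g: "g \<in> ?V'"
    define h where "h = (\<lambda>\<phi>\<in>C. g (inv_into I en \<phi>) \<phi>)"
    have inv: "\<phi> \<in> C \<Longrightarrow> inv_into I en \<phi> \<in> I \<and> en (inv_into I en \<phi>) = \<phi>" for \<phi>
      using en by (metis bij_betw_def bij_betw_inv_into_right inv_into_into)
    have hV: "h \<in> ?V"
    proof -
      have "h \<phi> \<in> verts (F \<phi>)" if "\<phi> \<in> C" for \<phi>
      proof -
        have "g (inv_into I en \<phi>) \<in> PiE {\<phi>} (\<lambda>i. verts (F i))" using g inv[OF that] by (metis PiE_mem)
        then show ?thesis using that by (auto simp: h_def)
      qed
      then show ?thesis by (auto simp: h_def PiE_iff)
    qed
    have "?p h = g"
    proof (rule PiE_ext[OF map[OF hV] g])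
      fix n assume n: "n \<in> I"
      have gn: "g n \<in> PiE {en n} (\<lambda>i. verts (F i))" using g n by (simp add: PiE_iff)
      have ii: "inv_into I en (en n) = n" using en n by (simp add: bij_betw_def inv_into_f_f)
      show "?p h n = g n"
      proof (rule PiE_ext[of _ "{en n}" "\<lambda>i. verts (F i)"])
        show "?p h n \<in> PiE {en n} (\<lambda>i. verts (F i))" using map[OF hV] n by (simp add: PiE_iff)
        show "g n \<in> PiE {en n} (\<lambda>i. verts (F i))" using gn .
        fix x assume "x \<in> {en n}"
        then show "?p h n x = g n x" using n ii enI by (simp add: h_def)
      qed
    qed
    then show "g \<in> ?p ` ?V" using hV by blast
  qed
  have bij: "bij_betw ?p ?V ?V'"
  proof -
    have "?p ` ?V = ?V'" using map surj by blast
    then show ?thesis unfolding bij_betw_def using inj by simp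
  qed
  have adj: "adj (cart_prod C F) x y \<longleftrightarrow> adj (cart_prod I (\<lambda>n. cart_prod {en n} F)) (?p x) (?p y)"
    if xy: "x \<in> ?V" "y \<in> ?V" for x y
  proof -
    have px: "?p x \<in> ?V'" "?p y \<in> ?V'" using map xy by auto
    have rx: "restrict x {en n} \<in> PiE {en n} (\<lambda>i. verts (F i))" "restrict y {en n} \<in> PiE {en n} (\<lambda>i. verts (F i))"
      if "n \<in> I" for n using xy that enI by (auto simp: PiE_iff)
    have eq: "(\<forall>m\<in>I. m \<noteq> n \<longrightarrow> ?p x m = ?p y m) \<longleftrightarrow> (\<forall>\<psi>\<in>C. \<psi> \<noteq> en n \<longrightarrow> x \<psi> = y \<psi>)"
      if n: "n \<in> I" for n
    proof
      assume a: "\<forall>m\<in>I. m \<noteq> n \<longrightarrow> ?p x m = ?p y m"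
      show "\<forall>\<psi>\<in>C. \<psi> \<noteq> en n \<longrightarrow> x \<psi> = y \<psi>"
      proof (intro ballI impI)
        fix \<psi> assume p: "\<psi> \<in> C" "\<psi> \<noteq> en n"
        then obtain m where m: "m \<in> I" "en m = \<psi>" using enC by blast
        then have "m \<noteq> n" using p by auto
        then have "?p x m = ?p y m" using a m(1) by blast
        then have "restrict x {en m} = restrict y {en m}" using m(1) by simp
        then have "restrict x {en m} (en m) = restrict y {en m} (en m)" by simp
        then show "x \<psi> = y \<psi>" using m by simp
      qed
    next
      assume a: "\<forall>\<psi>\<in>C. \<psi> \<noteq> en n \<longrightarrow> x \<psi> = y \<psi>"
      show "\<forall>m\<in>I. m \<noteq> n \<longrightarrow> ?p x m = ?p y m"
      proof (intro ballI impI)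
        fix m assume m: "m \<in> I" "m \<noteq> n"
        then have "en m \<noteq> en n" using eninj n by blast
        then have "x (en m) = y (en m)" using a enI m(1) by blast
        then show "?p x m = ?p y m" using m(1) by (auto simp: restrict_def)
      qed
    qed
    have "adj (cart_prod C F) x y \<longleftrightarrow> (\<exists>\<phi>\<in>C. adj (F \<phi>) (x \<phi>) (y \<phi>) \<and> (\<forall>\<psi>\<in>C. \<psi> \<noteq> \<phi> \<longrightarrow> x \<psi> = y \<psi>))"
      unfolding cart_prod_adj using xy by blast
    also have "\<dots> \<longleftrightarrow> (\<exists>n\<in>I. adj (F (en n)) (x (en n)) (y (en n)) \<and> (\<forall>\<psi>\<in>C. \<psi> \<noteq> en n \<longrightarrow> x \<psi> = y \<psi>))"
      by (rule bex_reindex[where P = "\<lambda>\<phi>. adj (F \<phi>) (x \<phi>) (y \<phi>) \<and> (\<forall>\<psi>\<in>C. \<psi> \<noteq> \<phi> \<longrightarrow> x \<psi> = y \<psi>)"])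
         (use enC enI in auto)
    also have "\<dots> \<longleftrightarrow> (\<exists>n\<in>I. adj (cart_prod {en n} F) (?p x n) (?p y n) \<and> (\<forall>m\<in>I. m \<noteq> n \<longrightarrow> ?p x m = ?p y m))"
    proof -
      have "adj (cart_prod {en n} F) (?p x n) (?p y n) \<longleftrightarrow> adj (F (en n)) (x (en n)) (y (en n))" if "n \<in> I" for n
        using rx[OF that] that by (simp add: single_prod_adj)
      then show ?thesis using eq by auto
    qed
    also have "\<dots> \<longleftrightarrow> adj (cart_prod I (\<lambda>n. cart_prod {en n} F)) (?p x) (?p y)"
      unfolding cart_prod_adj cart_prod_verts using px by blast
    finally show ?thesis .
  qed
  show ?thesis unfolding graph_iso_def using bij adj by (simp add: cart_prod_verts)
qed

lemma simple_cart_prod: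
  assumes "finite I" "\<And>i. i \<in> I \<Longrightarrow> finite (verts (Gs i))"
  shows "simple_graph (cart_prod I Gs)"
  unfolding simple_graph_def
proof
  show "finite (verts (cart_prod I Gs))" using assms by (simp add: cart_prod_verts finite_PiE)
  show "\<forall>e\<in>edges (cart_prod I Gs). \<exists>x y. x \<noteq> y \<and> x \<in> verts (cart_prod I Gs) \<and> y \<in> verts (cart_prod I Gs) \<and> e = {x, y}"
  proof
    fix e assume "e \<in> edges (cart_prod I Gs)"
    then obtain f g where fg: "e = {f, g}" "f \<in> PiE I (\<lambda>i. verts (Gs i))" "g \<in> PiE I (\<lambda>i. verts (Gs i))"
      "\<exists>i\<in>I. adj (Gs i) (f i) (g i)" by (auto simp: cart_prod_def)
    then have "f \<noteq> g" by (auto simp: adj_def)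
    then show "\<exists>x y. x \<noteq> y \<and> x \<in> verts (cart_prod I Gs) \<and> y \<in> verts (cart_prod I Gs) \<and> e = {x, y}"
      using fg by (auto simp: cart_prod_verts)
  qed
qed

context setting
begin

abbreviation "sf \<equiv> (\<lambda>\<phi>. star_factor \<phi> v)"

lemma finN: "\<phi> \<in> C \<Longrightarrow> finite (insert v (N_phi \<phi> v))"
  using finNv C_N by (auto simp: Nv_def intro: rev_finite_subset)

lemma verts_sf: "verts (sf \<phi>) = insert v (N_phi \<phi> v)" by (simp add: star_factor_def)

lemma prime_star:
  assumes p: "\<phi> \<in> C"
  shows "prime_graph (cart_prod {\<phi>} sf)"
proof -
  let ?Q = "cart_prod {\<phi>} sf"
  let ?c = "restrict (\<lambda>_. v) {\<phi>}"
  have VQ: "verts ?Q = PiE {\<phi>} (\<lambda>i. insert v (N_phi i v))" by (simp add: cart_prod_verts verts_sf)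
  have cQ: "?c \<in> verts ?Q" using VQ by auto
  have toc: "adj ?Q x ?c" if x: "x \<in> verts ?Q" "x \<noteq> ?c" for x
  proof -
    have "x \<phi> \<noteq> v"
    proof
      assume "x \<phi> = v"
      have "x = ?c"
      proof (rule PiE_ext[of x "{\<phi>}" "\<lambda>i. insert v (N_phi i v)" ?c])
        show "x \<in> PiE {\<phi>} (\<lambda>i. insert v (N_phi i v))" using x(1) VQ by simp
        show "?c \<in> PiE {\<phi>} (\<lambda>i. insert v (N_phi i v))" by auto
        fix y assume "y \<in> {\<phi>}" then show "x y = ?c y" using \<open>x \<phi> = v\<close> by simp
      qed
      then show False using x(2) by simp
    qed
    then have "x \<phi> \<in> N_phi \<phi> v" using x VQ by auto
    then show ?thesis unfolding single_prod_adj using x cQ star_adj[OF p] by (simp add: cart_prod_verts)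
  qed
  obtain u where u: "adj G v u" "cls u = \<phi>" using C_ex p by blast
  have uN: "u \<in> N_phi \<phi> v" using C_N p u by blast
  have uv: "u \<noteq> v" using u adjD by blast
  let ?l = "restrict (\<lambda>_. u) {\<phi>}"
  have lQ: "?l \<in> verts ?Q" using VQ uN by auto
  have lc: "?l \<noteq> ?c" using uv by (metis restrict_apply' singletonI)
  have fin: "finite (verts ?Q)" unfolding VQ by (intro finite_PiE) (use finN[OF p] in auto)
  have simple: "simple_graph ?Q" by (rule simple_cart_prod) (use finN p in \<open>auto simp: verts_sf\<close>)
  have card: "card (verts ?Q) \<ge> 2"
  proof -
    have "{?l, ?c} \<subseteq> verts ?Q" using lQ cQ by auto
    then have "card {?l, ?c} \<le> card (verts ?Q)" using card_mono fin by blast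
    then show ?thesis using lc by simp
  qed
  have conn: "connected_graph ?Q"
    unfolding connected_graph_def
  proof (intro ballI)
    fix x y assume xy: "x \<in> verts ?Q" "y \<in> verts ?Q"
    have "\<exists>p. walk ?Q p \<and> hd p = x \<and> last p = y"
    proof (cases "x = y")
      case True then show ?thesis using xy by (intro exI[of _ "[x]"]) (simp add: walk_single)
    next
      case False
      show ?thesis
      proof (cases "x = ?c")
        case True
        then have "adj ?Q x y" using toc[of y] xy False adj_sym by metis
        then show ?thesis using xy by (intro exI[of _ "[x, y]"]) (simp add: walk_Cons2 walk_single)
      next
        case xc: False
        show ?thesis
        proof (cases "y = ?c")
          case True
          then have "adj ?Q x y" using toc[of x] xy xc by metis
          then show ?thesis using xy by (intro exI[of _ "[x, y]"]) (simp add: walk_Cons2 walk_single)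
        next
          case yc: False
          have "adj ?Q x ?c" "adj ?Q ?c y" using toc xy xc yc adj_sym by metis+
          then show ?thesis using xy cQ by (intro exI[of _ "[x, ?c, y]"]) (simp add: walk_Cons2 walk_single)
        qed
      qed
    qed
    then obtain p where "walk ?Q p" "hd p = x" "last p = y" by blast
    then show "dist ?Q x y \<noteq> \<infinity>" using dist_le_walk by (metis enat_ord_simps(4) infinity_ileE)
  qed
  have nofac: "card (verts G1) = 1 \<or> card (verts G2) = 1"
    if g: "simple_graph G1" "simple_graph G2"
      "isomorphic ?Q (cart_prod {0::nat, 1} (\<lambda>i. if i = 0 then G1 else G2))" for G1 G2 :: "('a set set \<Rightarrow> 'a) graph"
  proof (rule ccontr)
    assume n1: "\<not> (card (verts G1) = 1 \<or> card (verts G2) = 1)"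
    let ?P2 = "cart_prod {0::nat, 1} (\<lambda>i. if i = 0 then G1 else G2)"
    obtain \<theta> where th: "graph_iso \<theta> ?Q ?P2" using g(3) by (auto simp: isomorphic_def)
    have thb: "bij_betw \<theta> (verts ?Q) (verts ?P2)" using th by (simp add: graph_iso_def)
    have tha: "x \<in> verts ?Q \<Longrightarrow> y \<in> verts ?Q \<Longrightarrow> adj ?Q x y \<longleftrightarrow> adj ?P2 (\<theta> x) (\<theta> y)" for x y
      using th by (simp add: graph_iso_def)
    have C0: "\<theta> ?c \<in> verts ?P2" using thb cQ bij_betwE by blast
    then have C00: "\<theta> ?c 0 \<in> verts G1" "\<theta> ?c 1 \<in> verts G2" by (auto simp: cart_prod_verts PiE_iff)
    have f1: "finite (verts G1)" "finite (verts G2)" using g by (auto simp: simple_graph_def)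
    have "card (verts G1) \<ge> 2"
    proof -
      have "card (verts G1) \<noteq> 0" using f1 C00 by auto
      then show ?thesis using n1 by linarith
    qed
    then obtain p where p: "p \<in> verts G1" "p \<noteq> \<theta> ?c 0"
      using other_elem[OF f1(1) _ C00(1)] by blast
    have "card (verts G2) \<ge> 2"
    proof -
      have "card (verts G2) \<noteq> 0" using f1 C00 by auto
      then show ?thesis using n1 by linarith
    qed
    then obtain q where q: "q \<in> verts G2" "q \<noteq> \<theta> ?c 1"
      using other_elem[OF f1(2) _ C00(2)] by blast
    define Z where "Z = (\<lambda>i\<in>{0::nat, 1}. if i = 0 then p else q)"
    have ZP: "Z \<in> verts ?P2" using p q by (auto simp: Z_def cart_prod_verts PiE_iff)
    have "Z \<in> \<theta> ` verts ?Q" using thb ZP by (simp add: bij_betw_def)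
    then obtain z where z: "z \<in> verts ?Q" "\<theta> z = Z" by blast
    have zc: "z \<noteq> ?c" using z p Z_def by auto
    have "adj ?P2 Z (\<theta> ?c)" using tha[OF z(1) cQ] toc[OF z(1) zc] z(2) by simp
    then obtain i where i: "i \<in> {0::nat, 1}" "\<forall>j\<in>{0::nat, 1}. j \<noteq> i \<longrightarrow> Z j = \<theta> ?c j"
      unfolding cart_prod_adj by blast
    show False
    proof (cases "i = 0")
      case True then have "Z 1 = \<theta> ?c 1" using i by simp
      then show False using q Z_def by simp
    next
      case False then have "Z 0 = \<theta> ?c 0" using i by simp
      then show False using p Z_def by simp
    qed
  qed
  show ?thesis unfolding prime_graph_def using simple card conn nofac by blast
qed

lemma PFD_exists: "\<exists>I Gs \<psi>. is_PFD H I Gs \<psi>"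
proof -
  obtain en where en: "bij_betw en {0..<card C} C" using ex_bij_betw_nat_finite finC by blast
  let ?Gs = "\<lambda>n. cart_prod {en n} sf"
  have g: "graph_iso (\<lambda>h. \<lambda>n\<in>{0..<card C}. restrict h {en n}) H (cart_prod {0..<card C} ?Gs)"
    by (rule reindex_iso[OF en])
  have pr: "\<forall>i\<in>{0..<card C}. prime_graph (?Gs i)"
  proof
    fix i assume "i \<in> {0..<card C}"
    then have "en i \<in> C" using en bij_betwE by blast
    then show "prime_graph (?Gs i)" by (rule prime_star)
  qed
  have "is_PFD H {0..<card C} ?Gs (\<lambda>h. \<lambda>n\<in>{0..<card C}. restrict h {en n})"
    unfolding is_PFD_def using g pr by simp
  then show ?thesis by blast
qed

end

context setting
begin

lemma hedgeH: "e \<in> edges H \<Longrightarrow> \<exists>a b. adj H a b \<and> e = {a, b}"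
proof -
  assume "e \<in> edges H"
  then obtain f g where fg: "e = {f, g}" "\<exists>i\<in>C. adj (sf i) (f i) (g i)" by (auto simp: cart_prod_def)
  then have "f \<noteq> g" by (auto simp: adj_def)
  then have "adj H f g" using fg \<open>e \<in> edges H\<close> by (simp add: adj_def)
  then show ?thesis using fg by blast
qed

end

locale pfdset = setting G v for G :: "'a graph" and v :: 'a +
  fixes I :: "nat set" and Gs :: "nat \<Rightarrow> ('a set set \<Rightarrow> 'a) graph" and \<psi> :: "('a set set \<Rightarrow> 'a) \<Rightarrow> nat \<Rightarrow> ('a set set \<Rightarrow> 'a)"
  assumes pfd: "is_PFD (cart_prod (star_classes G v) (\<lambda>\<phi>. star_factor \<phi> v)) I Gs \<psi>"
begin

sublocale piso "cart_prod (star_classes G v) (\<lambda>\<phi>. star_factor \<phi> v)" I Gs \<psi>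
proof
  show "graph_iso \<psi> H (cart_prod I Gs)" using pfd by (simp add: is_PFD_def)
  show "\<And>a b. adj H a b \<Longrightarrow> a \<in> verts H \<and> b \<in> verts H" using adjH_verts by blast
  show "\<And>e. e \<in> edges H \<Longrightarrow> \<exists>a b. adj H a b \<and> e = {a, b}" using hedgeH by blast
qed

lemma E1:
  assumes "finite X"
  shows "tv (insert u X) \<Longrightarrow> u \<notin> X \<Longrightarrow> adj H (hv X) (hv (insert u X)) \<and> co (hv X) (hv (insert u X)) = co (hv {}) (hv {u})"
  using assms
proof (induction X arbitrary: u rule: finite_induct)
  case empty
  have "tv {}" "tv {u}" using empty tv_sub by auto
  then have "adj H (hv {}) (hv {u})" using hv_adj by (simp add: ins1_def)
  then show ?case by simp
next
  case (insert y X)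
  have tv: "tv (insert u (insert y X))" using insert.prems(1) .
  have uy: "u \<noteq> y" "u \<notin> X" using insert.prems(2) by auto
  have t1: "tv X" "tv (insert u X)" "tv (insert y X)" using tv tv_sub by (blast, blast, blast)
  have IH: "adj H (hv X) (hv (insert u X)) \<and> co (hv X) (hv (insert u X)) = co (hv {}) (hv {u})"
    using insert.IH[OF t1(2) uy(2)] .
  have a2: "adj H (hv (insert u X)) (hv (insert u (insert y X)))"
    using hv_adj[OF t1(2) tv] insert.hyps(2) uy by (auto simp: ins1_def insert_commute)
  have a3: "adj H (hv (insert u (insert y X))) (hv (insert y X))"
    using hv_adj[OF tv t1(3)] insert.prems(2) by (auto simp: ins1_def)
  have a4: "adj H (hv (insert y X)) (hv X)"
    using hv_adj[OF t1(3) t1(1)] insert.hyps(2) by (auto simp: ins1_def)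
  have "X \<noteq> insert u (insert y X)" using insert.hyps(2) by blast
  then have ne1: "hv X \<noteq> hv (insert u (insert y X))" using hv_inj[OF t1(1) tv] by simp
  have ne2: "hv (insert u X) \<noteq> hv (insert y X)" using hv_inj[OF t1(2) t1(3)] uy insert.hyps(2) by auto
  have "co (hv X) (hv (insert u X)) = co (hv (insert u (insert y X))) (hv (insert y X))"
    using four_cycle[OF conjunct1[OF IH] a2 a3 a4 ne1 ne2] .
  then have "co (hv (insert y X)) (hv (insert u (insert y X))) = co (hv {}) (hv {u})"
    using IH co_sym[OF a3] by simp
  moreover have "adj H (hv (insert y X)) (hv (insert u (insert y X)))" using a3 adj_sym by metis
  ultimately show ?case by simp
qed

lemma E2:
  assumes "adj G v p" "adj G v q" "cls p = cls q"
  shows "co (hv {}) (hv {p}) = co (hv {}) (hv {q})"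
proof -
  have "(base p, base q) \<in> coord_rel H I \<psi>" using HD1[OF assms] delta_coord by blast
  moreover have "adj H (hv {}) (hv {p})" "adj H (hv {}) (hv {q})"
    using E1[of "{}"] tv_single assms by auto
  ultimately show ?thesis using coord_rel_iff by (simp add: base_def)
qed

definition fco :: "'a set set \<Rightarrow> nat" where
  "fco \<phi> = co (hv {}) (hv {SOME u. adj G v u \<and> cls u = \<phi>})"

lemma E3: "adj G v u \<Longrightarrow> fco (cls u) = co (hv {}) (hv {u})"
proof -
  assume u: "adj G v u"
  let ?u = "SOME w. adj G v w \<and> cls w = cls u"
  have "adj G v ?u \<and> cls ?u = cls u" by (rule someI[of _ u]) (use u in simp)
  then show ?thesis unfolding fco_def using E2 u by metis
qed

lemma E4:
  assumes "adj H a b"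
  shows "\<exists>u. adj G v u \<and> co a b = fco (cls u) \<and>
     ((W b = insert u (W a) \<and> u \<notin> W a) \<or> (W a = insert u (W b) \<and> u \<notin> W b))"
proof -
  have ab: "a \<in> verts H" "b \<in> verts H" using adjH_verts assms by auto
  have one: "\<exists>u. adj G v u \<and> co x y = fco (cls u) \<and> W y = insert u (W x) \<and> u \<notin> W x"
    if xy: "x \<in> verts H" "y \<in> verts H" "ins1 (W x) (W y)" for x y
  proof -
    obtain u where u: "u \<notin> W x" "W y = insert u (W x)" using xy(3) by (auto simp: ins1_def)
    have tvy: "tv (insert u (W x))" using W_tv[OF xy(2)] u(2) by simp
    then have uadj: "adj G v u" by (auto simp: tv_def Nv_def)
    have "co (hv (W x)) (hv (insert u (W x))) = co (hv {}) (hv {u})"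
      using E1[OF W_fin[OF xy(1)] tvy u(1)] by simp
    then have "co x y = fco (cls u)" using hv_W xy u(2) E3[OF uadj] by metis
    then show ?thesis using u uadj by blast
  qed
  from adjH[OF ab] assms have "ins1 (W a) (W b) \<or> ins1 (W b) (W a)" by simp
  then show ?thesis
  proof
    assume "ins1 (W a) (W b)" then show ?thesis using one ab by blast
  next
    assume "ins1 (W b) (W a)"
    then obtain u where "adj G v u" "co b a = fco (cls u)" "W a = insert u (W b)" "u \<notin> W b"
      using one ab by blast
    then show ?thesis using co_sym[OF assms] by metis
  qed
qed

lemma fco_base: "\<phi> \<in> C \<Longrightarrow> \<exists>u. adj G v u \<and> cls u = \<phi> \<and> adj H (hv {}) (hv {u}) \<and> co (hv {}) (hv {u}) = fco \<phi>"
proof -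
  assume p: "\<phi> \<in> C"
  then obtain u where u: "adj G v u" "cls u = \<phi>" using C_ex by blast
  have "adj H (hv {}) (hv {u})" using E1[of "{}" u] tv_single u by simp
  then show ?thesis using u E3 by metis
qed

definition K :: "nat \<Rightarrow> ('a set set \<Rightarrow> 'a) set set" where
  "K i = {f. \<exists>c d. adj H c d \<and> f = {c, d} \<and> co c d = i}"

lemma co_edge_eq: "adj H a b \<Longrightarrow> adj H c d \<Longrightarrow> {a, b} = {c, d} \<Longrightarrow> co a b = co c d"
  using co_sym by (auto simp: doubleton_eq_iff)

lemma class_K: "adj H a b \<Longrightarrow> coord_rel H I \<psi> `` {{a, b}} = K (co a b)"
proof -
  assume ab: "adj H a b"
  show ?thesis
  proof
    show "coord_rel H I \<psi> `` {{a, b}} \<subseteq> K (co a b)"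
    proof
      fix f assume "f \<in> coord_rel H I \<psi> `` {{a, b}}"
      then have f: "({a, b}, f) \<in> coord_rel H I \<psi>" by simp
      then have "f \<in> edges H" by (auto simp: coord_rel_def)
      then obtain c d where cd: "adj H c d" "f = {c, d}" using hedgeH by blast
      then have "co a b = co c d" using coord_rel_iff ab f by simp
      then show "f \<in> K (co a b)" using cd by (auto simp: K_def)
    qed
    show "K (co a b) \<subseteq> coord_rel H I \<psi> `` {{a, b}}"
    proof
      fix f assume "f \<in> K (co a b)"
      then obtain c d where cd: "adj H c d" "f = {c, d}" "co c d = co a b" by (auto simp: K_def)
      then show "f \<in> coord_rel H I \<psi> `` {{a, b}}" using coord_rel_iff ab by simp
    qed
  qed
qed

lemma count_H:
  assumes inj: "inj_on fco C"
  shows "card (edges H // coord_rel H I \<psi>) = card C"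
proof -
  have eq: "edges H // coord_rel H I \<psi> = K ` fco ` C"
  proof
    show "edges H // coord_rel H I \<psi> \<subseteq> K ` fco ` C"
    proof
      fix Q assume "Q \<in> edges H // coord_rel H I \<psi>"
      then obtain e where e: "e \<in> edges H" "Q = coord_rel H I \<psi> `` {e}" by (auto simp: quotient_def)
      then obtain a b where ab: "adj H a b" "e = {a, b}" using hedgeH by blast
      obtain u where u: "adj G v u" "co a b = fco (cls u)" using E4[OF ab(1)] by blast
      have "Q = K (fco (cls u))" using class_K ab e u by simp
      then show "Q \<in> K ` fco ` C" using cls_in_C u(1) by blast
    qed
    show "K ` fco ` C \<subseteq> edges H // coord_rel H I \<psi>"
    proof
      fix Q assume "Q \<in> K ` fco ` C"
      then obtain \<phi> where p: "\<phi> \<in> C" "Q = K (fco \<phi>)" by blast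
      obtain u where u: "adj H (hv {}) (hv {u})" "co (hv {}) (hv {u}) = fco \<phi>" using fco_base p by blast
      have "Q = coord_rel H I \<psi> `` {{hv {}, hv {u}}}" using class_K[OF u(1)] u p by simp
      moreover have "{hv {}, hv {u}} \<in> edges H" using u(1) by (simp add: adj_def)
      ultimately show "Q \<in> edges H // coord_rel H I \<psi>" by (auto simp: quotient_def)
    qed
  qed
  have injK: "inj_on K (fco ` C)"
  proof (rule inj_onI)
    fix i j assume ij: "i \<in> fco ` C" "j \<in> fco ` C" "K i = K j"
    then obtain \<phi> where p: "\<phi> \<in> C" "i = fco \<phi>" by blast
    obtain u where u: "adj H (hv {}) (hv {u})" "co (hv {}) (hv {u}) = fco \<phi>" using fco_base p by blast
    have "{hv {}, hv {u}} \<in> K i" using u p by (auto simp: K_def)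
    then have "{hv {}, hv {u}} \<in> K j" using ij by simp
    then obtain c d where cd: "adj H c d" "{hv {}, hv {u}} = {c, d}" "co c d = j" by (auto simp: K_def)
    then show "i = j" using co_edge_eq[OF u(1) cd(1) cd(2)] u p by simp
  qed
  have "card (K ` fco ` C) = card (fco ` C)" using card_image[OF injK] .
  also have "\<dots> = card C" using card_image[OF inj] .
  finally show ?thesis using eq by simp
qed

end

locale layer = pfdset G v I Gs \<psi>
  for G :: "'a graph" and v :: 'a and I Gs \<psi> +
  fixes \<phi>1 \<phi>2 :: "'a set set"
  assumes p1: "\<phi>1 \<in> star_classes G v" and p2: "\<phi>2 \<in> star_classes G v"
    and ne12: "\<phi>1 \<noteq> \<phi>2" and eq12: "fco \<phi>1 = fco \<phi>2"
begin

definition "i0 = fco \<phi>1"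
definition "A = {\<phi> \<in> C. fco \<phi> = i0}"
definition "L = {a \<in> verts H. \<forall>\<phi>\<in>C. \<phi> \<notin> A \<longrightarrow> a \<phi> = v}"
abbreviation "Ob \<equiv> \<psi> vbar"
definition "pre Y = inv_into (verts H) \<psi> Y"
abbreviation "PV \<equiv> PiE I (\<lambda>i. verts (Gs i))"

lemma i0_I: "i0 \<in> I"
proof -
  obtain u where u: "adj H (hv {}) (hv {u})" "co (hv {}) (hv {u}) = fco \<phi>1" using fco_base p1 by blast
  then show ?thesis using co_prop(1)[OF u(1)] by (simp add: i0_def)
qed

lemma A_C: "A \<subseteq> C" by (auto simp: A_def)
lemma p12A: "\<phi>1 \<in> A" "\<phi>2 \<in> A" using p1 p2 eq12 by (auto simp: A_def i0_def)

lemma Lchar: "a \<in> verts H \<Longrightarrow> a \<in> L \<longleftrightarrow> cls ` W a \<subseteq> A"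
proof
  assume a: "a \<in> verts H" "a \<in> L"
  show "cls ` W a \<subseteq> A"
  proof
    fix c assume "c \<in> cls ` W a"
    then obtain \<phi> where p: "\<phi> \<in> C" "a \<phi> \<noteq> v" "c = cls (a \<phi>)" by (auto simp: W_def)
    then have "c = \<phi>" using coordN a(1) by simp
    then show "c \<in> A" using a(2) p by (auto simp: L_def)
  qed
next
  assume a: "a \<in> verts H" "cls ` W a \<subseteq> A"
  show "a \<in> L" unfolding L_def
  proof (intro CollectI conjI ballI impI)
    show "a \<in> verts H" using a(1) .
    fix \<phi> assume p: "\<phi> \<in> C" "\<phi> \<notin> A"
    show "a \<phi> = v"
    proof (rule ccontr)
      assume n: "a \<phi> \<noteq> v"
      then have "a \<phi> \<in> W a" using p by (auto simp: W_def)
      moreover have "cls (a \<phi>) = \<phi>" using coordN a(1) p(1) n by blast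
      ultimately show False using a(2) p(2) by blast
    qed
  qed
qed

lemma L_H: "a \<in> L \<Longrightarrow> a \<in> verts H" by (simp add: L_def)

lemma vbar_L: "vbar \<in> L" using vbar_H by (auto simp: L_def)

lemma L1_set:
  assumes "finite X"
  shows "tv X \<Longrightarrow> cls ` X \<subseteq> A \<Longrightarrow> j \<noteq> i0 \<Longrightarrow> \<psi> (hv X) j = \<psi> (hv {}) j"
  using assms
proof (induction X rule: finite_induct)
  case empty then show ?case by simp
next
  case (insert u X)
  have t: "tv X" using insert.prems(1) tv_sub by blast
  have uadj: "adj G v u" using insert.prems(1) by (auto simp: tv_def Nv_def)
  note e = E1[OF insert.hyps(1) insert.prems(1) insert.hyps(2)]
  have "co (hv X) (hv (insert u X)) = i0"
    using e E3[OF uadj] insert.prems(2) by (auto simp: A_def)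
  then have "\<psi> (hv X) j = \<psi> (hv (insert u X)) j" using co_prop(3)[OF conjunct1[OF e]] insert.prems(3) by metis
  then show ?case using insert.IH[OF t _ insert.prems(3)] insert.prems(2) by simp
qed

lemma L1: "a \<in> L \<Longrightarrow> j \<noteq> i0 \<Longrightarrow> \<psi> a j = Ob j"
proof -
  assume a: "a \<in> L" "j \<noteq> i0"
  have aH: "a \<in> verts H" using a L_H by blast
  have "\<psi> (hv (W a)) j = \<psi> (hv {}) j"
    using L1_set[OF W_fin[OF aH] W_tv[OF aH]] Lchar aH a by blast
  then show ?thesis using hv_W[OF aH] hv_empty by simp
qed

lemma O_P: "Ob \<in> PV" using psi_P vbar_H by blast

lemma L1': "a \<in> L \<Longrightarrow> Ob(i0 := \<psi> a i0) = \<psi> a"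
proof
  fix j assume a: "a \<in> L"
  show "(Ob(i0 := \<psi> a i0)) j = \<psi> a j"
    by (cases "j = i0") (use L1[OF a] in auto)
qed

lemma pre: "Y \<in> PV \<Longrightarrow> pre Y \<in> verts H \<and> \<psi> (pre Y) = Y"
proof -
  assume Y: "Y \<in> PV"
  then have "Y \<in> \<psi> ` verts H" using psi_bij by (simp add: bij_betw_def)
  then show ?thesis unfolding pre_def by (simp add: inv_into_into f_inv_into_f)
qed

lemma pre_psi: "a \<in> verts H \<Longrightarrow> pre (\<psi> a) = a"
  unfolding pre_def using psi_bij by (simp add: bij_betw_def)

lemma prime_i: "prime_graph (Gs i0)" using pfd i0_I by (simp add: is_PFD_def)

lemma Gi_adjV: "adj (Gs i0) x y \<Longrightarrow> x \<in> verts (Gs i0) \<and> y \<in> verts (Gs i0)"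
proof -
  assume a: "adj (Gs i0) x y"
  have s: "simple_graph (Gs i0)" using prime_i by (simp add: prime_graph_def)
  have "{x, y} \<in> edges (Gs i0)" "x \<noteq> y" using a by (auto simp: adj_def)
  then show ?thesis using s by (auto simp: simple_graph_def doubleton_eq_iff)
qed

lemma Oupd_P: "y \<in> verts (Gs i0) \<Longrightarrow> Ob(i0 := y) \<in> PV"
  using O_P i0_I by (auto simp: PiE_iff extensional_def)

lemma adj_Oupd: "y \<in> verts (Gs i0) \<Longrightarrow> y' \<in> verts (Gs i0) \<Longrightarrow>
   adj P (Ob(i0 := y)) (Ob(i0 := y')) \<longleftrightarrow> adj (Gs i0) y y'"
proof
  assume y: "y \<in> verts (Gs i0)" "y' \<in> verts (Gs i0)" and a: "adj P (Ob(i0 := y)) (Ob(i0 := y'))"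
  then obtain i where i: "i \<in> I" "adj (Gs i) ((Ob(i0 := y)) i) ((Ob(i0 := y')) i)"
    using adjP_coord by blast
  show "adj (Gs i0) y y'"
  proof (cases "i = i0")
    case True then show ?thesis using i by simp
  next
    case False then have "adj (Gs i) (Ob i) (Ob i)" using i by simp
    then show ?thesis by (simp add: adj_def)
  qed
next
  assume y: "y \<in> verts (Gs i0)" "y' \<in> verts (Gs i0)" and a: "adj (Gs i0) y y'"
  show "adj P (Ob(i0 := y)) (Ob(i0 := y'))"
    unfolding cart_prod_adj using Oupd_P[OF y(1)] Oupd_P[OF y(2)] a i0_I by auto
qed

definition "f1 y = pre (Ob(i0 := y))"

lemma f1: "y \<in> verts (Gs i0) \<Longrightarrow> f1 y \<in> verts H \<and> \<psi> (f1 y) = Ob(i0 := y)"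
  unfolding f1_def using pre Oupd_P by blast

lemma adj_f1: "y \<in> verts (Gs i0) \<Longrightarrow> y' \<in> verts (Gs i0) \<Longrightarrow> adj H (f1 y) (f1 y') \<longleftrightarrow> adj (Gs i0) y y'"
  using psi_adj f1 adj_Oupd by metis

lemma Lstep:
  assumes x: "x \<in> verts (Gs i0)" and y: "y \<in> verts (Gs i0)" and a: "adj (Gs i0) x y" and L: "f1 x \<in> L"
  shows "f1 y \<in> L"
proof -
  have aH: "adj H (f1 x) (f1 y)" using adj_f1 x y a by blast
  have c: "co (f1 x) (f1 y) = i0"
  proof (rule ccontr)
    assume "co (f1 x) (f1 y) \<noteq> i0"
    then have "\<psi> (f1 x) (co (f1 x) (f1 y)) = \<psi> (f1 y) (co (f1 x) (f1 y))" using f1 x y by simp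
    then show False using co_prop(2)[OF aH] by simp
  qed
  obtain u where u: "adj G v u" "co (f1 x) (f1 y) = fco (cls u)"
    "(W (f1 y) = insert u (W (f1 x)) \<and> u \<notin> W (f1 x)) \<or> (W (f1 x) = insert u (W (f1 y)) \<and> u \<notin> W (f1 y))"
    using E4[OF aH] by blast
  have uA: "cls u \<in> A" using u c cls_in_C by (auto simp: A_def)
  have sub: "W (f1 y) \<subseteq> insert u (W (f1 x))" using u(3) by blast
  have "cls ` W (f1 x) \<subseteq> A" using Lchar L f1 x by blast
  then have "cls ` W (f1 y) \<subseteq> A" using sub uA by blast
  then show ?thesis using Lchar f1 y by blast
qed

lemma Lwalk: "walk (Gs i0) p \<Longrightarrow> f1 (hd p) \<in> L \<Longrightarrow> f1 (last p) \<in> L"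
proof (induction p rule: induct_list012)
  case 1 then show ?case by (simp add: walk_def)
next
  case (2 x) then show ?case by simp
next
  case (3 x y zs)
  have w: "walk (Gs i0) (y # zs)" "adj (Gs i0) x y" using 3(3) by (auto simp: walk_Cons2)
  have fx: "f1 x \<in> L" using 3(4) by simp
  have "f1 y \<in> L" using Lstep[of x y] Gi_adjV[OF w(2)] w(2) fx by blast
  then show ?case using 3(2)[OF w(1)] by simp
qed

lemma f1_L: "y \<in> verts (Gs i0) \<Longrightarrow> f1 y \<in> L"
proof -
  assume y: "y \<in> verts (Gs i0)"
  have Oi: "Ob i0 \<in> verts (Gs i0)" using O_P i0_I by (auto simp: PiE_iff)
  have "connected_graph (Gs i0)" using prime_i by (simp add: prime_graph_def)
  then have "dist (Gs i0) (Ob i0) y \<noteq> \<infinity>" using Oi y by (simp add: connected_graph_def)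
  from dist_finite_walk[OF this] obtain p where p: "walk (Gs i0) p" "hd p = Ob i0" "last p = y" by blast
  have "f1 (Ob i0) = vbar" unfolding f1_def fun_upd_triv using pre_psi[OF vbar_H] .
  then have "f1 (hd p) \<in> L" using p(2) vbar_L by simp
  then have "f1 (last p) \<in> L" using Lwalk p(1) by blast
  then show ?thesis using p(3) by simp
qed

lemma B1: "bij_betw f1 (verts (Gs i0)) L"
  unfolding bij_betw_def
proof
  show "inj_on f1 (verts (Gs i0))"
  proof (rule inj_onI)
    fix y y' assume yy: "y \<in> verts (Gs i0)" "y' \<in> verts (Gs i0)" "f1 y = f1 y'"
    then have "Ob(i0 := y) = Ob(i0 := y')" using f1 by metis
    then show "y = y'" by (metis fun_upd_same)
  qed
  show "f1 ` verts (Gs i0) = L"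
  proof
    show "f1 ` verts (Gs i0) \<subseteq> L" using f1_L by blast
    show "L \<subseteq> f1 ` verts (Gs i0)"
    proof
      fix a assume a: "a \<in> L"
      have aH: "a \<in> verts H" using L_H a .
      have y: "\<psi> a i0 \<in> verts (Gs i0)" using psi_P[OF aH] i0_I by (auto simp: PiE_iff)
      have "f1 (\<psi> a i0) = a" unfolding f1_def using L1'[OF a] pre_psi[OF aH] by simp
      then show "a \<in> f1 ` verts (Gs i0)" using y by (metis image_eqI)
    qed
  qed
qed

end

context layer
begin

abbreviation "G1 \<equiv> cart_prod {\<phi>1} sf"
abbreviation "G2 \<equiv> cart_prod (A - {\<phi>1}) sf"
abbreviation "GG \<equiv> (\<lambda>n::nat. if n = 0 then G1 else G2)"
abbreviation "P2 \<equiv> cart_prod {0::nat, 1} GG"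
abbreviation "Vs \<equiv> (\<lambda>\<phi>. insert v (N_phi \<phi> v))"
definition split :: "('a set set \<Rightarrow> 'a) \<Rightarrow> nat \<Rightarrow> ('a set set \<Rightarrow> 'a)" where
  "split a = (\<lambda>n\<in>{0::nat, 1}. if n = 0 then restrict a {\<phi>1} else restrict a (A - {\<phi>1}))"

lemma vG1: "verts G1 = PiE {\<phi>1} Vs" by (simp add: cart_prod_verts verts_sf)
lemma vG2: "verts G2 = PiE (A - {\<phi>1}) Vs" by (simp add: cart_prod_verts verts_sf)
lemma vP2: "verts P2 = PiE {0::nat, 1} (\<lambda>n. if n = 0 then PiE {\<phi>1} Vs else PiE (A - {\<phi>1}) Vs)"
proof -
  have "\<And>n. verts (GG n) = (if n = 0 then PiE {\<phi>1} Vs else PiE (A - {\<phi>1}) Vs)" using vG1 vG2 by simp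
  then show ?thesis by (simp add: cart_prod_verts)
qed

lemma restrict_eq: "restrict f X = restrict g X \<longleftrightarrow> (\<forall>x\<in>X. f x = g x)"
proof
  assume eq: "restrict f X = restrict g X"
  show "\<forall>x\<in>X. f x = g x"
  proof
    fix x assume x: "x \<in> X"
    have "restrict f X x = restrict g X x" using eq by simp
    then show "f x = g x" using x by simp
  qed
next
  assume "\<forall>x\<in>X. f x = g x"
  then show "restrict f X = restrict g X" by (intro restrict_ext) blast
qed

lemma p1C: "\<phi>1 \<in> C" using p1 .

lemma split0: "split a 0 = restrict a {\<phi>1}" by (simp add: split_def)
lemma split1: "split a 1 = restrict a (A - {\<phi>1})" by (simp add: split_def)

lemma split_P2: "a \<in> L \<Longrightarrow> split a \<in> verts P2"
proof -
  assume a: "a \<in> L"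
  then have aV: "a \<in> PiE C Vs" using L_H vertsH by blast
  have "restrict a {\<phi>1} \<in> PiE {\<phi>1} Vs" using aV p1C by (auto simp: PiE_iff)
  moreover have "restrict a (A - {\<phi>1}) \<in> PiE (A - {\<phi>1}) Vs" using aV A_C by (auto simp: PiE_iff)
  ultimately show ?thesis unfolding vP2 by (auto simp: split_def PiE_iff)
qed

lemma B2: "bij_betw split L (verts P2)"
  unfolding bij_betw_def
proof
  show "inj_on split L"
  proof (rule inj_onI)
    fix a b assume ab: "a \<in> L" "b \<in> L" "split a = split b"
    have r0: "restrict a {\<phi>1} = restrict b {\<phi>1}" using ab(3) split0 by metis
    have r1: "restrict a (A - {\<phi>1}) = restrict b (A - {\<phi>1})" using ab(3) split1 by metis
    have aV: "a \<in> PiE C Vs" "b \<in> PiE C Vs" using ab L_H vertsH by blast+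
    show "a = b"
    proof (rule PiE_ext[OF aV])
      fix \<phi> assume p: "\<phi> \<in> C"
      show "a \<phi> = b \<phi>"
      proof (cases "\<phi> = \<phi>1")
        case True then show ?thesis using r0 by (metis restrict_apply' singletonI)
      next
        case False
        show ?thesis
        proof (cases "\<phi> \<in> A")
          case True then show ?thesis using r1 False by (metis restrict_apply' DiffI singletonD)
        next
          case na: False then show ?thesis using ab(1,2) p by (simp add: L_def)
        qed
      qed
    qed
  qed
  show "split ` L = verts P2"
  proof
    show "split ` L \<subseteq> verts P2" using split_P2 by blast
    show "verts P2 \<subseteq> split ` L"
    proof
      fix g assume g: "g \<in> verts P2"
      have g0: "g 0 \<in> PiE {\<phi>1} Vs" and g1: "g 1 \<in> PiE (A - {\<phi>1}) Vs" using g unfolding vP2 by (auto simp: PiE_iff)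
      define a where "a = (\<lambda>\<phi>\<in>C. if \<phi> = \<phi>1 then g 0 \<phi>1 else if \<phi> \<in> A then g 1 \<phi> else v)"
      have aH: "a \<in> verts H" unfolding vertsH a_def using g0 g1 by (auto simp: PiE_iff)
      have aL: "a \<in> L" using aH p12A by (auto simp: L_def a_def)
      have "split a = g"
      proof (rule PiE_ext[OF split_P2[OF aL, unfolded vP2] g[unfolded vP2]])
        fix n :: nat assume n: "n \<in> {0, 1}"
        show "split a n = g n"
        proof (cases "n = 0")
          case True
          have "restrict a {\<phi>1} = g 0"
          proof (rule PiE_ext[of _ "{\<phi>1}" Vs])
            show "restrict a {\<phi>1} \<in> PiE {\<phi>1} Vs" using aH p1C by (auto simp: vertsH PiE_iff)
            show "g 0 \<in> PiE {\<phi>1} Vs" using g0 .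
            fix x assume "x \<in> {\<phi>1}" then show "restrict a {\<phi>1} x = g 0 x" using p1C by (simp add: a_def)
          qed
          then show ?thesis using True split0 by simp
        next
          case False
          then have n1: "n = 1" using n by simp
          have "restrict a (A - {\<phi>1}) = g 1"
          proof (rule PiE_ext[of _ "A - {\<phi>1}" Vs])
            show "restrict a (A - {\<phi>1}) \<in> PiE (A - {\<phi>1}) Vs" using aH A_C by (auto simp: vertsH PiE_iff)
            show "g 1 \<in> PiE (A - {\<phi>1}) Vs" using g1 .
            fix x assume "x \<in> A - {\<phi>1}" then show "restrict a (A - {\<phi>1}) x = g 1 x" using A_C by (auto simp: a_def)
          qed
          then show ?thesis using n1 split1 by simp
        qed
      qed
      then show "g \<in> split ` L" using aL by blast
    qed
  qed
qed

lemma adjH_gen: "adj H a b \<longleftrightarrow> a \<in> PiE C Vs \<and> b \<in> PiE C Vs \<and>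
   (\<exists>\<phi>\<in>C. adj (sf \<phi>) (a \<phi>) (b \<phi>) \<and> (\<forall>\<psi>\<in>C. \<psi> \<noteq> \<phi> \<longrightarrow> a \<psi> = b \<psi>))"
  unfolding cart_prod_adj by (simp add: verts_sf)

lemma adj2:
  assumes a: "a \<in> L" and b: "b \<in> L"
  shows "adj H a b \<longleftrightarrow> adj P2 (split a) (split b)"
proof -
  have aV: "a \<in> PiE C Vs" "b \<in> PiE C Vs" using a b L_H vertsH by blast+
  have sP: "split a \<in> PiE {0::nat, 1} (\<lambda>n. verts (GG n))" "split b \<in> PiE {0::nat, 1} (\<lambda>n. verts (GG n))"
    using split_P2 a b by (simp_all add: cart_prod_verts)
  have outA: "\<psi> \<in> C \<Longrightarrow> \<psi> \<notin> A \<Longrightarrow> a \<psi> = v \<and> b \<psi> = v" for \<psi> using a b by (simp add: L_def)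
  have sfne: "adj (sf \<phi>) x y \<Longrightarrow> x \<noteq> y" for \<phi> x y by (simp add: adj_def)
  have r0V: "restrict a {\<phi>1} \<in> PiE {\<phi>1} (\<lambda>i. verts (sf i))" "restrict b {\<phi>1} \<in> PiE {\<phi>1} (\<lambda>i. verts (sf i))"
    using aV p1C by (auto simp: PiE_iff verts_sf)
  have r1V: "restrict a (A - {\<phi>1}) \<in> PiE (A - {\<phi>1}) (\<lambda>i. verts (sf i))" "restrict b (A - {\<phi>1}) \<in> PiE (A - {\<phi>1}) (\<lambda>i. verts (sf i))"
    using aV A_C by (auto simp: PiE_iff verts_sf)
  have adjG1: "adj G1 (split a 0) (split b 0) \<longleftrightarrow> adj (sf \<phi>1) (a \<phi>1) (b \<phi>1)"
    unfolding split0 single_prod_adj using r0V by simp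
  have adjG2: "adj G2 (split a 1) (split b 1) \<longleftrightarrow>
     (\<exists>\<phi>\<in>A - {\<phi>1}. adj (sf \<phi>) (a \<phi>) (b \<phi>) \<and> (\<forall>\<psi>\<in>A - {\<phi>1}. \<psi> \<noteq> \<phi> \<longrightarrow> a \<psi> = b \<psi>))"
    unfolding split1 cart_prod_adj using r1V by simp
  have eq0: "split a 0 = split b 0 \<longleftrightarrow> a \<phi>1 = b \<phi>1"
    unfolding split0 restrict_eq by simp
  have eq1: "split a 1 = split b 1 \<longleftrightarrow> (\<forall>\<psi>\<in>A - {\<phi>1}. a \<psi> = b \<psi>)"
    unfolding split1 restrict_eq by simp
  have P2adj: "adj P2 (split a) (split b) \<longleftrightarrow>
     (adj G1 (split a 0) (split b 0) \<and> split a 1 = split b 1) \<or>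
     (adj G2 (split a 1) (split b 1) \<and> split a 0 = split b 0)"
  proof -
    have "adj P2 (split a) (split b) \<longleftrightarrow> split a \<in> PiE {0::nat, 1} (\<lambda>n. verts (GG n)) \<and> split b \<in> PiE {0::nat, 1} (\<lambda>n. verts (GG n)) \<and>
      (\<exists>n\<in>{0::nat, 1}. adj (GG n) (split a n) (split b n) \<and> (\<forall>m\<in>{0::nat, 1}. m \<noteq> n \<longrightarrow> split a m = split b m))"
      by (rule cart_prod_adj)
    then show ?thesis using sP by auto
  qed
  show ?thesis
  proof
    assume ab: "adj H a b"
    have "\<exists>\<phi>\<in>C. adj (sf \<phi>) (a \<phi>) (b \<phi>) \<and> (\<forall>\<psi>\<in>C. \<psi> \<noteq> \<phi> \<longrightarrow> a \<psi> = b \<psi>)"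
      using adjH_gen[THEN iffD1, OF ab] by (elim conjE)
    then obtain \<phi> where p: "\<phi> \<in> C" "adj (sf \<phi>) (a \<phi>) (b \<phi>)" "\<forall>\<psi>\<in>C. \<psi> \<noteq> \<phi> \<longrightarrow> a \<psi> = b \<psi>"
      by (elim bexE conjE) blast
    have pA: "\<phi> \<in> A" using outA p sfne by metis
    show "adj P2 (split a) (split b)"
    proof (cases "\<phi> = \<phi>1")
      case True
      have "split a 1 = split b 1" using eq1 p(3) True A_C by auto
      then show ?thesis using P2adj adjG1 p True by simp
    next
      case False
      have "adj G2 (split a 1) (split b 1)" using adjG2 p pA False A_C by blast
      moreover have "split a 0 = split b 0" using eq0 p(3) False p1C by auto
      ultimately show ?thesis using P2adj by simp
    qed
  next
    assume asm: "adj P2 (split a) (split b)"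
    from P2adj[THEN iffD1, OF asm] show "adj H a b"
    proof (elim disjE conjE)
      assume h1: "adj G1 (split a 0) (split b 0)" and h2: "split a 1 = split b 1"
      have z1: "adj (sf \<phi>1) (a \<phi>1) (b \<phi>1)" using adjG1[THEN iffD1, OF h1] .
      have z2: "\<forall>\<psi>\<in>A - {\<phi>1}. a \<psi> = b \<psi>" using eq1[THEN iffD1, OF h2] .
      have "\<forall>\<psi>\<in>C. \<psi> \<noteq> \<phi>1 \<longrightarrow> a \<psi> = b \<psi>"
      proof (intro ballI impI)
        fix \<psi> assume "\<psi> \<in> C" "\<psi> \<noteq> \<phi>1"
        then show "a \<psi> = b \<psi>" using z2 outA by (cases "\<psi> \<in> A") auto
      qed
      then show ?thesis unfolding adjH_gen using aV z1 p1C by blast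
    next
      assume h1: "adj G2 (split a 1) (split b 1)" and h2: "split a 0 = split b 0"
      obtain \<phi> where o: "\<phi> \<in> A - {\<phi>1}" "adj (sf \<phi>) (a \<phi>) (b \<phi>)" "\<forall>\<psi>\<in>A - {\<phi>1}. \<psi> \<noteq> \<phi> \<longrightarrow> a \<psi> = b \<psi>"
        using adjG2[THEN iffD1, OF h1] by blast
      have o4: "a \<phi>1 = b \<phi>1" using eq0[THEN iffD1, OF h2] .
      have "\<forall>\<psi>\<in>C. \<psi> \<noteq> \<phi> \<longrightarrow> a \<psi> = b \<psi>"
      proof (intro ballI impI)
        fix \<psi> assume "\<psi> \<in> C" "\<psi> \<noteq> \<phi>"
        then show "a \<psi> = b \<psi>" using o(3) o4 outA by (cases "\<psi> \<in> A"; cases "\<psi> = \<phi>1") auto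
      qed
      then show ?thesis unfolding adjH_gen using aV o(1,2) A_C by blast
    qed
  qed
qed

lemma contradiction: False
proof -
  let ?T = "\<lambda>y. split (f1 y)"
  have bij: "bij_betw ?T (verts (Gs i0)) (verts P2)"
    using bij_betw_trans[OF B1 B2] by (simp add: comp_def)
  have adj: "\<forall>x\<in>verts (Gs i0). \<forall>y\<in>verts (Gs i0). adj (Gs i0) x y = adj P2 (?T x) (?T y)"
    using adj_f1 adj2 f1_L by metis
  have iso: "isomorphic (Gs i0) P2" unfolding isomorphic_def graph_iso_def using bij adj by blast
  have finA: "finite (A - {\<phi>1})" using A_C finC by (meson finite_Diff finite_subset)
  have s1: "simple_graph G1" by (rule simple_cart_prod) (use finN p1C in \<open>auto simp: verts_sf\<close>)
  have s2: "simple_graph G2" by (rule simple_cart_prod) (use finN A_C finA in \<open>auto simp: verts_sf\<close>)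
  obtain u1 where u1: "adj G v u1" "cls u1 = \<phi>1" using C_ex p1C by blast
  obtain u2 where u2: "adj G v u2" "cls u2 = \<phi>2" using C_ex p2 by blast
  have u1N: "u1 \<in> N_phi \<phi>1 v" using C_N p1C u1 by blast
  have u2N: "u2 \<in> N_phi \<phi>2 v" using C_N p2 u2 by blast
  have u1v: "u1 \<noteq> v" "u2 \<noteq> v" using u1 u2 adjD by blast+
  have fv1: "finite (verts G1)" using s1 by (simp add: simple_graph_def)
  have fv2: "finite (verts G2)" using s2 by (simp add: simple_graph_def)
  have c1: "card (verts G1) \<noteq> 1"
  proof -
    let ?x = "restrict (\<lambda>_. v) {\<phi>1}" and ?y = "restrict (\<lambda>_. u1) {\<phi>1}"
    have sub: "{?x, ?y} \<subseteq> verts G1" using u1N by (auto simp: vG1 PiE_iff)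
    have "?x \<phi>1 \<noteq> ?y \<phi>1" using u1v by simp
    then have "?x \<noteq> ?y" by metis
    then have "card {?x, ?y} = 2" by simp
    then have "2 \<le> card (verts G1)" using card_mono[OF fv1 sub] by simp
    then show ?thesis by simp
  qed
  have p2A: "\<phi>2 \<in> A - {\<phi>1}" using p12A ne12 by auto
  have c2: "card (verts G2) \<noteq> 1"
  proof -
    let ?x = "restrict (\<lambda>_. v) (A - {\<phi>1})" and ?y = "restrict (\<lambda>\<phi>. if \<phi> = \<phi>2 then u2 else v) (A - {\<phi>1})"
    have sub: "{?x, ?y} \<subseteq> verts G2" using u2N by (auto simp: vG2 PiE_iff)
    have "?x \<phi>2 \<noteq> ?y \<phi>2" using u1v p2A by simp
    then have "?x \<noteq> ?y" by metis
    then have "card {?x, ?y} = 2" by simp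
    then have "2 \<le> card (verts G2)" using card_mono[OF fv2 sub] by simp
    then show ?thesis by simp
  qed
  show False using prime_i s1 s2 iso c1 c2 unfolding prime_graph_def by blast
qed

end

context pfdset
begin

lemma fco_inj: "inj_on fco C"
proof (rule inj_onI, rule ccontr)
  fix \<phi>1 \<phi>2 assume a: "\<phi>1 \<in> C" "\<phi>2 \<in> C" "fco \<phi>1 = fco \<phi>2" "\<phi>1 \<noteq> \<phi>2"
  interpret layer G v I Gs \<psi> \<phi>1 \<phi>2 by unfold_locales (use a in auto)
  show False by (rule contradiction)
qed

lemma count_H': "card (edges H // coord_rel H I \<psi>) = card C"
  using count_H fco_inj by blast

end

context setting
begin

lemma R_class: "(e, {v, u}) \<in> R \<Longrightarrow> R `` {e} = cls u"
  unfolding cls_def using R_equiv equiv_class_eq by metis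

lemma dre_class: "e \<in> edges S \<Longrightarrow> d_restr G v `` {e} = R `` {e} \<inter> edges S"
  by (auto simp: d_restr_def)

lemma count_S: "card (edges S // d_restr G v) = card C"
proof -
  have eq: "edges S // d_restr G v = (\<lambda>\<phi>. \<phi> \<inter> edges S) ` C"
  proof
    show "edges S // d_restr G v \<subseteq> (\<lambda>\<phi>. \<phi> \<inter> edges S) ` C"
    proof
      fix Q assume "Q \<in> edges S // d_restr G v"
      then obtain e where e: "e \<in> edges S" "Q = d_restr G v `` {e}" by (auto simp: quotient_def)
      obtain u where u: "adj G v u" "(e, {v, u}) \<in> R" using edgeS_desc e(1) by blast
      have "Q = cls u \<inter> edges S" using e dre_class R_class u(2) by simp
      then show "Q \<in> (\<lambda>\<phi>. \<phi> \<inter> edges S) ` C" using cls_in_C u(1) by blast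
    qed
    show "(\<lambda>\<phi>. \<phi> \<inter> edges S) ` C \<subseteq> edges S // d_restr G v"
    proof
      fix Q assume "Q \<in> (\<lambda>\<phi>. \<phi> \<inter> edges S) ` C"
      then obtain \<phi> where p: "\<phi> \<in> C" "Q = \<phi> \<inter> edges S" by blast
      obtain u where u: "adj G v u" "cls u = \<phi>" using C_ex p(1) by blast
      have e: "{v, u} \<in> edges S" using u(1) by (auto simp: edgesS)
      have "({v, u}, {v, u}) \<in> R" using R_refl adjD u(1) by blast
      then have "d_restr G v `` {{v, u}} = Q" using dre_class[OF e] R_class p u by simp
      then show "Q \<in> edges S // d_restr G v" using e by (auto simp: quotient_def)
    qed
  qed
  have inj: "inj_on (\<lambda>\<phi>. \<phi> \<inter> edges S) C"
  proof (rule inj_onI)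
    fix \<phi> \<phi>' assume a: "\<phi> \<in> C" "\<phi>' \<in> C" "\<phi> \<inter> edges S = \<phi>' \<inter> edges S"
    obtain u where u: "adj G v u" "cls u = \<phi>" using C_ex a(1) by blast
    obtain w where w: "adj G v w" "cls w = \<phi>'" using C_ex a(2) by blast
    have "{v, u} \<in> edges S" using u(1) by (auto simp: edgesS)
    moreover have "{v, u} \<in> cls u" using R_refl adjD u(1) by (auto simp: cls_def)
    ultimately have "{v, u} \<in> cls w" using a(3) u(2) w(2) by blast
    then have "({v, w}, {v, u}) \<in> R" by (simp add: cls_def)
    then have "cls w = cls u" using cls_eq_iff u(1) w(1) by blast
    then show "\<phi> = \<phi>'" using u w by simp
  qed
  show ?thesis using eq card_image[OF inj] by simp
qed

end

theorem theorem3p7: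
  fixes G :: "'a graph" and v :: 'a
  assumes "simple_graph G" and "v \<in> verts G"
  defines "H \<equiv> cart_prod (star_classes G v) (\<lambda>\<phi>. star_factor \<phi> v)"
    and "vbar \<equiv> (\<lambda>\<phi>\<in>star_classes G v. v)"
    and "S \<equiv> partial_star G v"
  shows "(\<exists>\<gamma>. graph_iso \<gamma> S (induced H (N2 H vbar)) \<and> \<gamma> v = vbar \<and>
            (\<forall>\<phi>\<in>star_classes G v. \<forall>u\<in>N_phi \<phi> v. \<gamma> u = vbar(\<phi> := u)) \<and>
            isometric_emb \<gamma> S H \<and>
            {(\<gamma> ` e, \<gamma> ` f) | e f. (e, f) \<in> d_restr G v} \<subseteq> (delta H)\<^sup>+ \<and>
            (delta H)\<^sup>+ \<subseteq> sigma H) \<and>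
         card (edges H // sigma H) = card (edges S // d_restr G v)"
proof -
  interpret setting G v using assms(1,2) by unfold_locales
  let ?t = "SOME (I, Gs, \<psi>). is_PFD H I Gs \<psi>"
  have ex: "\<exists>t. case t of (I, Gs, \<psi>) \<Rightarrow> is_PFD H I Gs \<psi>"
    using PFD_exists unfolding H_def by auto
  have "case ?t of (I, Gs, \<psi>) \<Rightarrow> is_PFD H I Gs \<psi>" using someI_ex[OF ex] .
  then obtain I Gs \<psi> where t: "?t = (I, Gs, \<psi>)" and pfd: "is_PFD H I Gs \<psi>"
    by (cases ?t) auto
  have sig: "sigma H = coord_rel H I \<psi>" unfolding sigma_def using t by simp
  interpret pfdset G v I Gs \<psi> using pfd unfolding H_def by unfold_locales
  have "graph_iso gam S (induced H (N2 H vbar)) \<and> gam v = vbar \<and>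
            (\<forall>\<phi>\<in>star_classes G v. \<forall>u\<in>N_phi \<phi> v. gam u = vbar(\<phi> := u)) \<and>
            isometric_emb gam S H \<and>
            {(gam ` e, gam ` f) | e f. (e, f) \<in> d_restr G v} \<subseteq> (delta H)\<^sup>+ \<and>
            (delta H)\<^sup>+ \<subseteq> sigma H"
    using part1 part2a trancl_delta_coord sig unfolding H_def vbar_def S_def by simp
  moreover have "card (edges H // sigma H) = card (edges S // d_restr G v)"
    using count_H' count_S sig unfolding H_def S_def by simp
  ultimately show ?thesis by blast
qed


end
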